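(* Let $D$ be a directed graph with vertex set $I$ and $A=kD$ its path algebra, and let $r$ be any of $r_b,r_l,r_k,r_j$. Then $r(A)=\mathrm{g.m.}\,r(A)=\sum\{r(A_{ij})\mid i,j\in I\}=kR(D)$.
   Context: $k$ is a field; $D$ may be infinite and have multiple arrows and loops. The path algebra $A=kD=\bigoplus_{i,j\in I}A_{ij}$, where $A_{ij}$ is the $k$-span of paths from $i$ to $j$ of length $\ge1$, plus the trivial path $e_{ii}$ when $i=j$; multiplication is concatenation. A regular path is a path of length $\ge1$ from a vertex $i$ to a vertex $j$ such that there is no path from $j$ to $i$; $R(D)$ is the set of regular paths and $kR(D)$ its $k$-span. $r(A)$ is the ring radical of $A$ ($r_b$ Baer/prime, $r_l$ Levitzki, $r_k$ nil (Köthe), $r_j$ Jacobson). $A_{ij}$ is regarded as a $\Gamma$-ring with $\Gamma=A_{ji}$, and $r(A_{ij})$ is the corresponding $\Gamma$-ring radical (Coppage–Luh). $\mathrm{g.m.}\,r(A)$ is the largest ideal of $A$ of the form $\bigoplus B_{ij}$, $B_{ij}\subseteq A_{ij}$, contained in $r(A)$. *)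

theory Defs
  imports Main "HOL-Library.Function_Algebras"
begin

text \<open>A ring is given by a carrier A (an additive subgroup of an ab_group_add type) and a
multiplication mul.  Only additive structure and mul are used (no unit is assumed).\<close>

definition add_subgroup :: "'a::ab_group_add set \<Rightarrow> bool" where
  "add_subgroup S \<longleftrightarrow> 0 \<in> S \<and> (\<forall>x\<in>S. \<forall>y\<in>S. x - y \<in> S)"

definition add_span :: "'a::ab_group_add set \<Rightarrow> 'a set" where
  "add_span S = \<Inter>{G. S \<subseteq> G \<and> add_subgroup G}"

definition r_ideal :: "'a::ab_group_add set \<Rightarrow> ('a \<Rightarrow> 'a \<Rightarrow> 'a) \<Rightarrow> 'a set \<Rightarrow> bool" where
  "r_ideal A mul I \<longleftrightarrow> I \<subseteq> A \<and> add_subgroup I \<and> (\<forall>a\<in>A. \<forall>x\<in>I. mul a x \<in> I \<and> mul x a \<in> I)"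

text \<open>ideal generated by S; for S a union of ideals this is their sum\<close>
definition ideal_gen :: "'a::ab_group_add set \<Rightarrow> ('a \<Rightarrow> 'a \<Rightarrow> 'a) \<Rightarrow> 'a set \<Rightarrow> 'a set" where
  "ideal_gen A mul S = \<Inter>{J. r_ideal A mul J \<and> S \<subseteq> J}"

definition r_prime :: "'a::ab_group_add set \<Rightarrow> ('a \<Rightarrow> 'a \<Rightarrow> 'a) \<Rightarrow> 'a set \<Rightarrow> bool" where
  "r_prime A mul P \<longleftrightarrow> r_ideal A mul P \<and>
     (\<forall>B C. r_ideal A mul B \<and> r_ideal A mul C \<and> (\<forall>b\<in>B. \<forall>c\<in>C. mul b c \<in> P) \<longrightarrow> B \<subseteq> P \<or> C \<subseteq> P)"

definition baer_rad :: "'a::ab_group_add set \<Rightarrow> ('a \<Rightarrow> 'a \<Rightarrow> 'a) \<Rightarrow> 'a set" where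
  "baer_rad A mul = \<Inter>{P. r_prime A mul P}"

text \<open>x^(n+1) = foldl mul x (replicate n x)\<close>
definition r_nil :: "('a::ab_group_add \<Rightarrow> 'a \<Rightarrow> 'a) \<Rightarrow> 'a set \<Rightarrow> bool" where
  "r_nil mul I \<longleftrightarrow> (\<forall>x\<in>I. \<exists>n. foldl mul x (replicate n x) = 0)"

definition r_locnil :: "('a::ab_group_add \<Rightarrow> 'a \<Rightarrow> 'a) \<Rightarrow> 'a set \<Rightarrow> bool" where
  "r_locnil mul I \<longleftrightarrow> (\<forall>F. finite F \<and> F \<subseteq> I \<longrightarrow>
      (\<exists>n. \<forall>x xs. x \<in> F \<and> set xs \<subseteq> F \<and> length xs = n \<longrightarrow> foldl mul x xs = 0))"

definition r_qreg :: "'a::ab_group_add set \<Rightarrow> ('a \<Rightarrow> 'a \<Rightarrow> 'a) \<Rightarrow> 'a set \<Rightarrow> bool" where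
  "r_qreg A mul I \<longleftrightarrow> (\<forall>a\<in>I. \<exists>b\<in>A. a + b + mul a b = 0)"

definition nil_rad :: "'a::ab_group_add set \<Rightarrow> ('a \<Rightarrow> 'a \<Rightarrow> 'a) \<Rightarrow> 'a set" where
  "nil_rad A mul = ideal_gen A mul (\<Union>{I. r_ideal A mul I \<and> r_nil mul I})"

definition lev_rad :: "'a::ab_group_add set \<Rightarrow> ('a \<Rightarrow> 'a \<Rightarrow> 'a) \<Rightarrow> 'a set" where
  "lev_rad A mul = ideal_gen A mul (\<Union>{I. r_ideal A mul I \<and> r_locnil mul I})"

definition jac_rad :: "'a::ab_group_add set \<Rightarrow> ('a \<Rightarrow> 'a \<Rightarrow> 'a) \<Rightarrow> 'a set" where
  "jac_rad A mul = ideal_gen A mul (\<Union>{I. r_ideal A mul I \<and> r_qreg A mul I})"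

datatype radical_kind = Baer | Levitzki | Koethe | Jacobson

fun ring_rad :: "radical_kind \<Rightarrow> 'a::ab_group_add set \<Rightarrow> ('a \<Rightarrow> 'a \<Rightarrow> 'a) \<Rightarrow> 'a set" where
  "ring_rad Baer A mul = baer_rad A mul"
| "ring_rad Levitzki A mul = lev_rad A mul"
| "ring_rad Koethe A mul = nil_rad A mul"
| "ring_rad Jacobson A mul = jac_rad A mul"

section \<open>Gamma-rings (Coppage--Luh): M, Gamma, ternary product tri a g b = a g b\<close>

definition g_ideal :: "'a::ab_group_add set \<Rightarrow> 'a set \<Rightarrow> ('a \<Rightarrow> 'a \<Rightarrow> 'a \<Rightarrow> 'a) \<Rightarrow> 'a set \<Rightarrow> bool" where
  "g_ideal M G tri I \<longleftrightarrow> I \<subseteq> M \<and> add_subgroup I \<and>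
     (\<forall>a\<in>M. \<forall>g\<in>G. \<forall>x\<in>I. tri a g x \<in> I \<and> tri x g a \<in> I)"

definition g_ideal_gen :: "'a::ab_group_add set \<Rightarrow> 'a set \<Rightarrow> ('a \<Rightarrow> 'a \<Rightarrow> 'a \<Rightarrow> 'a) \<Rightarrow> 'a set \<Rightarrow> 'a set" where
  "g_ideal_gen M G tri S = \<Inter>{J. g_ideal M G tri J \<and> S \<subseteq> J}"

definition g_prime :: "'a::ab_group_add set \<Rightarrow> 'a set \<Rightarrow> ('a \<Rightarrow> 'a \<Rightarrow> 'a \<Rightarrow> 'a) \<Rightarrow> 'a set \<Rightarrow> bool" where
  "g_prime M G tri P \<longleftrightarrow> g_ideal M G tri P \<and>
     (\<forall>U V. g_ideal M G tri U \<and> g_ideal M G tri V \<and> (\<forall>u\<in>U. \<forall>g\<in>G. \<forall>v\<in>V. tri u g v \<in> P)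
        \<longrightarrow> U \<subseteq> P \<or> V \<subseteq> P)"

definition g_baer_rad :: "'a::ab_group_add set \<Rightarrow> 'a set \<Rightarrow> ('a \<Rightarrow> 'a \<Rightarrow> 'a \<Rightarrow> 'a) \<Rightarrow> 'a set" where
  "g_baer_rad M G tri = \<Inter>{P. g_prime M G tri P}"

definition gfold :: "('a \<Rightarrow> 'a \<Rightarrow> 'a \<Rightarrow> 'a) \<Rightarrow> 'a \<Rightarrow> ('a \<times> 'a) list \<Rightarrow> 'a" where
  "gfold tri x ps = foldl (\<lambda>acc gy. tri acc (fst gy) (snd gy)) x ps"

text \<open>x is nilpotent iff (x Gamma)^n x = 0 for some n\<close>
definition g_nil :: "'a::ab_group_add set \<Rightarrow> ('a \<Rightarrow> 'a \<Rightarrow> 'a \<Rightarrow> 'a) \<Rightarrow> 'a set \<Rightarrow> bool" where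
  "g_nil G tri I \<longleftrightarrow> (\<forall>x\<in>I. \<exists>n. \<forall>gs. length gs = n \<and> set gs \<subseteq> G \<longrightarrow>
       gfold tri x (map (\<lambda>g. (g, x)) gs) = 0)"

text \<open>locally nilpotent: for finite F in I and finite Phi in Gamma, (F Phi)^n F = 0 for some n\<close>
definition g_locnil :: "'a::ab_group_add set \<Rightarrow> ('a \<Rightarrow> 'a \<Rightarrow> 'a \<Rightarrow> 'a) \<Rightarrow> 'a set \<Rightarrow> bool" where
  "g_locnil G tri I \<longleftrightarrow> (\<forall>F \<Phi>. finite F \<and> F \<subseteq> I \<and> finite \<Phi> \<and> \<Phi> \<subseteq> G \<longrightarrow>
      (\<exists>n. \<forall>x ps. x \<in> F \<and> length ps = n \<and> set ps \<subseteq> \<Phi> \<times> F \<longrightarrow> gfold tri x ps = 0))"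

text \<open>right quasi-regular in every ring (M, +, \<lambda>x y. x g y)\<close>
definition g_qreg :: "'a::ab_group_add set \<Rightarrow> 'a set \<Rightarrow> ('a \<Rightarrow> 'a \<Rightarrow> 'a \<Rightarrow> 'a) \<Rightarrow> 'a set \<Rightarrow> bool" where
  "g_qreg M G tri I \<longleftrightarrow> (\<forall>a\<in>I. \<forall>g\<in>G. \<exists>b\<in>M. a + b + tri a g b = 0)"

definition g_nil_rad :: "'a::ab_group_add set \<Rightarrow> 'a set \<Rightarrow> ('a \<Rightarrow> 'a \<Rightarrow> 'a \<Rightarrow> 'a) \<Rightarrow> 'a set" where
  "g_nil_rad M G tri = g_ideal_gen M G tri (\<Union>{I. g_ideal M G tri I \<and> g_nil G tri I})"

definition g_lev_rad :: "'a::ab_group_add set \<Rightarrow> 'a set \<Rightarrow> ('a \<Rightarrow> 'a \<Rightarrow> 'a \<Rightarrow> 'a) \<Rightarrow> 'a set" where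
  "g_lev_rad M G tri = g_ideal_gen M G tri (\<Union>{I. g_ideal M G tri I \<and> g_locnil G tri I})"

definition g_jac_rad :: "'a::ab_group_add set \<Rightarrow> 'a set \<Rightarrow> ('a \<Rightarrow> 'a \<Rightarrow> 'a \<Rightarrow> 'a) \<Rightarrow> 'a set" where
  "g_jac_rad M G tri = g_ideal_gen M G tri (\<Union>{I. g_ideal M G tri I \<and> g_qreg M G tri I})"

fun gamma_rad :: "radical_kind \<Rightarrow> 'a::ab_group_add set \<Rightarrow> 'a set \<Rightarrow> ('a \<Rightarrow> 'a \<Rightarrow> 'a \<Rightarrow> 'a) \<Rightarrow> 'a set" where
  "gamma_rad Baer M G tri = g_baer_rad M G tri"
| "gamma_rad Levitzki M G tri = g_lev_rad M G tri"
| "gamma_rad Koethe M G tri = g_nil_rad M G tri"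
| "gamma_rad Jacobson M G tri = g_jac_rad M G tri"

record ('v, 'e) quiver =
  verts :: "'v set"
  arrs :: "'e set"
  src :: "'e \<Rightarrow> 'v"
  tgt :: "'e \<Rightarrow> 'v"

definition wf_quiver :: "('v, 'e) quiver \<Rightarrow> bool" where
  "wf_quiver Q \<longleftrightarrow> (\<forall>a\<in>arrs Q. src Q a \<in> verts Q \<and> tgt Q a \<in> verts Q)"

text \<open>A path is (start vertex, list of arrows); the empty list is the trivial path e_ii.\<close>
type_synonym ('v, 'e) qpath = "'v \<times> 'e list"

definition pend :: "('v, 'e) quiver \<Rightarrow> ('v, 'e) qpath \<Rightarrow> 'v" where
  "pend Q p = (if snd p = [] then fst p else tgt Q (last (snd p)))"

definition is_path :: "('v, 'e) quiver \<Rightarrow> ('v, 'e) qpath \<Rightarrow> bool" where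
  "is_path Q p \<longleftrightarrow> fst p \<in> verts Q \<and> set (snd p) \<subseteq> arrs Q \<and>
     (snd p \<noteq> [] \<longrightarrow> src Q (hd (snd p)) = fst p) \<and>
     (\<forall>n. Suc n < length (snd p) \<longrightarrow> tgt Q (snd p ! n) = src Q (snd p ! Suc n))"

definition has_path :: "('v, 'e) quiver \<Rightarrow> 'v \<Rightarrow> 'v \<Rightarrow> bool" where
  "has_path Q i j \<longleftrightarrow> (\<exists>p. is_path Q p \<and> fst p = i \<and> pend Q p = j)"

definition regular_path :: "('v, 'e) quiver \<Rightarrow> ('v, 'e) qpath \<Rightarrow> bool" where
  "regular_path Q p \<longleftrightarrow> is_path Q p \<and> snd p \<noteq> [] \<and> \<not> has_path Q (pend Q p) (fst p)"

text \<open>Elements of kD: finitely supported k-valued functions on paths.\<close>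
definition palg :: "('v, 'e) quiver \<Rightarrow> (('v, 'e) qpath \<Rightarrow> 'k::field) set" where
  "palg Q = {f. finite {p. f p \<noteq> 0} \<and> (\<forall>p. f p \<noteq> 0 \<longrightarrow> is_path Q p)}"

text \<open>Multiplication = concatenation: (f*g)(p) = sum over splittings p = q r of f q * g r.\<close>
definition pmul :: "('v, 'e) quiver \<Rightarrow> (('v, 'e) qpath \<Rightarrow> 'k::field) \<Rightarrow> (('v, 'e) qpath \<Rightarrow> 'k) \<Rightarrow> (('v, 'e) qpath \<Rightarrow> 'k)" where
  "pmul Q f g = (\<lambda>p. if is_path Q p then
      (\<Sum>n\<in>{0..length (snd p)}. f (fst p, take n (snd p)) * g (pend Q (fst p, take n (snd p)), drop n (snd p)))
     else 0)"

definition palg_ij :: "('v, 'e) quiver \<Rightarrow> 'v \<Rightarrow> 'v \<Rightarrow> (('v, 'e) qpath \<Rightarrow> 'k::field) set" where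
  "palg_ij Q i j = {f \<in> palg Q. \<forall>p. f p \<noteq> 0 \<longrightarrow> fst p = i \<and> pend Q p = j}"

definition pcomp :: "('v, 'e) quiver \<Rightarrow> 'v \<Rightarrow> 'v \<Rightarrow> (('v, 'e) qpath \<Rightarrow> 'k::field) \<Rightarrow> (('v, 'e) qpath \<Rightarrow> 'k)" where
  "pcomp Q i j f = (\<lambda>p. if fst p = i \<and> pend Q p = j then f p else 0)"

definition ptri :: "('v, 'e) quiver \<Rightarrow> (('v, 'e) qpath \<Rightarrow> 'k::field) \<Rightarrow> (('v, 'e) qpath \<Rightarrow> 'k) \<Rightarrow> (('v, 'e) qpath \<Rightarrow> 'k) \<Rightarrow> (('v, 'e) qpath \<Rightarrow> 'k)" where
  "ptri Q a g b = pmul Q (pmul Q a g) b"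

definition kR :: "('v, 'e) quiver \<Rightarrow> (('v, 'e) qpath \<Rightarrow> 'k::field) set" where
  "kR Q = {f \<in> palg Q. \<forall>p. f p \<noteq> 0 \<longrightarrow> regular_path Q p}"

text \<open>g.m. r(A): largest ideal of the form (+)B_ij, B_ij \<subseteq> A_ij, contained in r(A)
  (= sum of all such graded ideals).\<close>
definition gm_rad :: "radical_kind \<Rightarrow> ('v, 'e) quiver \<Rightarrow> (('v, 'e) qpath \<Rightarrow> 'k::field) set" where
  "gm_rad r Q = ideal_gen (palg Q) (pmul Q)
     (\<Union>{I. r_ideal (palg Q) (pmul Q) I \<and>
          (\<forall>x\<in>I. \<forall>i\<in>verts Q. \<forall>j\<in>verts Q. pcomp Q i j x \<in> I) \<and>
          I \<subseteq> ring_rad r (palg Q) (pmul Q)})"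

definition sum_gamma_rad :: "radical_kind \<Rightarrow> ('v, 'e) quiver \<Rightarrow> (('v, 'e) qpath \<Rightarrow> 'k::field) set" where
  "sum_gamma_rad r Q = add_span (\<Union>i\<in>verts Q. \<Union>j\<in>verts Q.
       gamma_rad r (palg_ij Q i j) (palg_ij Q j i) (ptri Q))"

end

theory Submission
  imports Defs
begin

lemma is_path_Nil[simp]: "is_path Q (a, []) \<longleftrightarrow> a \<in> verts Q"
  by (simp add: is_path_def)

lemma pend_Nil[simp]: "pend Q (a, []) = a" by (simp add: pend_def)
lemma pend_Cons[simp]: "pend Q (a, e # es) = pend Q (tgt Q e, es)"
  by (simp add: pend_def)
lemma pend_append: "pend Q (a, xs @ ys) = pend Q (pend Q (a, xs), ys)"
  by (simp add: pend_def)

context fixes Q :: "('v,'e) quiver" assumes wf: "wf_quiver Q"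
begin

lemma is_path_Cons[simp]:
  "is_path Q (a, e # es) \<longleftrightarrow> a \<in> verts Q \<and> e \<in> arrs Q \<and> src Q e = a \<and> is_path Q (tgt Q e, es)"
proof
  assume H: "is_path Q (a, e # es)"
  have c: "\<And>n. Suc n < length (e#es) \<Longrightarrow> tgt Q ((e#es) ! n) = src Q ((e#es) ! Suc n)"
    using H by (simp add: is_path_def)
  have "e \<in> arrs Q" using H by (simp add: is_path_def)
  moreover have "tgt Q e \<in> verts Q" using wf calculation by (simp add: wf_quiver_def)
  moreover have "es \<noteq> [] \<Longrightarrow> src Q (hd es) = tgt Q e"
    using c[of 0] by (cases es) auto
  moreover have "\<And>n. Suc n < length es \<Longrightarrow> tgt Q (es ! n) = src Q (es ! Suc n)"
    using c by (metis Suc_less_eq length_Cons nth_Cons_Suc)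
  ultimately show "a \<in> verts Q \<and> e \<in> arrs Q \<and> src Q e = a \<and> is_path Q (tgt Q e, es)"
    using H by (auto simp: is_path_def)
next
  assume H: "a \<in> verts Q \<and> e \<in> arrs Q \<and> src Q e = a \<and> is_path Q (tgt Q e, es)"
  have "\<And>n. Suc n < length (e#es) \<Longrightarrow> tgt Q ((e#es) ! n) = src Q ((e#es) ! Suc n)"
  proof -
    fix n assume n: "Suc n < length (e#es)"
    show "tgt Q ((e#es) ! n) = src Q ((e#es) ! Suc n)"
    proof (cases n)
      case 0 then show ?thesis using H n by (cases es) (auto simp: is_path_def)
    next
      case (Suc m) then show ?thesis using H n by (auto simp: is_path_def)
    qed
  qed
  then show "is_path Q (a, e # es)" using H by (auto simp: is_path_def)
qed

lemma is_path_vert: "is_path Q (a, xs) \<Longrightarrow> a \<in> verts Q"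
  by (simp add: is_path_def)

lemma is_path_append:
  "is_path Q (a, xs @ ys) \<longleftrightarrow> is_path Q (a, xs) \<and> is_path Q (pend Q (a, xs), ys)"
  by (induction xs arbitrary: a) (auto dest: is_path_vert)

lemma pend_vert: "is_path Q (a, xs) \<Longrightarrow> pend Q (a, xs) \<in> verts Q"
  by (induction xs arbitrary: a) auto

lemma path_split:
  assumes "is_path Q p"
  shows "is_path Q (fst p, take n (snd p))"
    "is_path Q (pend Q (fst p, take n (snd p)), drop n (snd p))"
    "pend Q (pend Q (fst p, take n (snd p)), drop n (snd p)) = pend Q p"
proof -
  obtain a xs where p: "p = (a, xs)" by fastforce
  have "is_path Q (a, take n xs @ drop n xs)" using assms p by simp
  then show "is_path Q (fst p, take n (snd p))"
    "is_path Q (pend Q (fst p, take n (snd p)), drop n (snd p))"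
    using p is_path_append[of a "take n xs" "drop n xs"] by auto
  show "pend Q (pend Q (fst p, take n (snd p)), drop n (snd p)) = pend Q p"
    using p pend_append[of Q a "take n xs" "drop n xs"] by simp
qed

lemma has_path_iff: "has_path Q i j \<longleftrightarrow> (\<exists>xs. is_path Q (i, xs) \<and> pend Q (i, xs) = j)"
  unfolding has_path_def by auto

lemma has_path_refl: "i \<in> verts Q \<Longrightarrow> has_path Q i i"
  unfolding has_path_iff by (rule exI[of _ "[]"]) simp

lemma has_path_path: "is_path Q p \<Longrightarrow> has_path Q (fst p) (pend Q p)"
  unfolding has_path_def by blast

lemma has_path_trans: "has_path Q i j \<Longrightarrow> has_path Q j k \<Longrightarrow> has_path Q i k"
  unfolding has_path_iff
  by (metis is_path_append pend_append)

lemma path_verts: "is_path Q p \<Longrightarrow> fst p \<in> verts Q \<and> pend Q p \<in> verts Q"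
  by (metis is_path_vert pend_vert prod.collapse)

end

abbreviation tk :: "('v,'e) qpath \<Rightarrow> nat \<Rightarrow> ('v,'e) qpath" where
  "tk p n \<equiv> (fst p, take n (snd p))"
abbreviation dr :: "('v,'e) quiver \<Rightarrow> ('v,'e) qpath \<Rightarrow> nat \<Rightarrow> ('v,'e) qpath" where
  "dr Q p n \<equiv> (pend Q (fst p, take n (snd p)), drop n (snd p))"

definition dl :: "('v,'e) qpath \<Rightarrow> 'k \<Rightarrow> ('v,'e) qpath \<Rightarrow> 'k::field" where
  "dl p c = (\<lambda>q. if q = p then c else 0)"

lemma pmul_eq: "pmul Q f g p = (if is_path Q p then
   (\<Sum>n\<in>{0..length (snd p)}. f (tk p n) * g (dr Q p n)) else 0)"
  by (simp add: pmul_def)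

lemma pmul_nz:
  assumes "pmul Q f g p \<noteq> 0"
  shows "is_path Q p \<and> (\<exists>n\<le>length (snd p). f (tk p n) \<noteq> 0 \<and> g (dr Q p n) \<noteq> 0)"
proof -
  have ip: "is_path Q p" using assms by (auto simp: pmul_eq split: if_splits)
  have "(\<Sum>n\<in>{0..length (snd p)}. f (tk p n) * g (dr Q p n)) \<noteq> 0"
    using assms ip by (simp add: pmul_eq)
  then obtain n where "n \<in> {0..length (snd p)}" "f (tk p n) * g (dr Q p n) \<noteq> 0"
    by (meson sum.neutral)
  then show ?thesis using ip by auto
qed

lemma pmul_single:
  assumes "is_path Q p" "m \<le> length (snd p)"
    "\<And>n. n \<le> length (snd p) \<Longrightarrow> n \<noteq> m \<Longrightarrow> f (tk p n) * g (dr Q p n) = 0"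
  shows "pmul Q f g p = f (tk p m) * g (dr Q p m)"
proof -
  have "(\<Sum>n\<in>{0..length (snd p)}. f (tk p n) * g (dr Q p n)) =
        f (tk p m) * g (dr Q p m) + (\<Sum>n\<in>{0..length (snd p)} - {m}. f (tk p n) * g (dr Q p n))"
    using assms(2) by (subst sum.remove[of _ m]) auto
  also have "(\<Sum>n\<in>{0..length (snd p)} - {m}. f (tk p n) * g (dr Q p n)) = 0"
    using assms(3) by (intro sum.neutral) auto
  finally show ?thesis using assms(1) by (simp add: pmul_eq)
qed

lemma pmul_zero_left[simp]: "pmul Q (\<lambda>_. 0) g = (\<lambda>_. 0)"
  by (rule ext) (simp add: pmul_eq)
lemma pmul_zero_right[simp]: "pmul Q f (\<lambda>_. 0) = (\<lambda>_. 0)"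
  by (rule ext) (simp add: pmul_eq)
lemma pmul_zero_left'[simp]: "pmul Q 0 g = 0"
  by (rule ext) (simp add: pmul_eq)
lemma pmul_zero_right'[simp]: "pmul Q f 0 = 0"
  by (rule ext) (simp add: pmul_eq)

lemma pmul_Nil: "a \<in> verts Q \<Longrightarrow> pmul Q f g (a, []) = f (a, []) * g (a, [])"
  by (simp add: pmul_eq)

lemma palgI: "finite {p. f p \<noteq> 0} \<Longrightarrow> (\<And>p. f p \<noteq> 0 \<Longrightarrow> is_path Q p) \<Longrightarrow> f \<in> palg Q"
  by (simp add: palg_def)
lemma palg_fin: "f \<in> palg Q \<Longrightarrow> finite {p. f p \<noteq> 0}" by (simp add: palg_def)
lemma palg_path: "f \<in> palg Q \<Longrightarrow> f p \<noteq> 0 \<Longrightarrow> is_path Q p" unfolding palg_def by blast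

lemma palg_zero: "(0::('v,'e) qpath \<Rightarrow> 'k::field) \<in> palg Q"
  by (simp add: palg_def)

lemma palg_diff: assumes "f \<in> palg Q" "g \<in> palg Q" shows "f - g \<in> palg Q"
proof (rule palgI)
  have "{p. (f - g) p \<noteq> 0} \<subseteq> {p. f p \<noteq> 0} \<union> {p. g p \<noteq> 0}" by auto
  then show "finite {p. (f - g) p \<noteq> 0}" using assms palg_fin finite_subset by blast
  show "\<And>p. (f - g) p \<noteq> 0 \<Longrightarrow> is_path Q p" using assms palg_path
    by (metis diff_zero fun_diff_def)
qed

lemma palg_add: assumes "f \<in> palg Q" "g \<in> palg Q" shows "f + g \<in> palg Q"
proof (rule palgI)
  have "{p. (f + g) p \<noteq> 0} \<subseteq> {p. f p \<noteq> 0} \<union> {p. g p \<noteq> 0}" by auto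
  then show "finite {p. (f + g) p \<noteq> 0}" using assms palg_fin finite_subset by blast
  show "\<And>p. (f + g) p \<noteq> 0 \<Longrightarrow> is_path Q p" using assms palg_path
    by (metis add.right_neutral plus_fun_def add.left_neutral)
qed

lemma palg_dl: "is_path Q p \<Longrightarrow> dl p c \<in> palg Q"
  by (rule palgI) (auto simp: dl_def split: if_splits intro: finite_subset[of _ "{p}"])

lemma pmul_supp: "{p. pmul Q f g p \<noteq> 0} \<subseteq>
   (\<lambda>(q, r). (fst q, snd q @ snd r)) ` ({q. f q \<noteq> 0} \<times> {r. g r \<noteq> 0})"
proof
  fix p assume "p \<in> {p. pmul Q f g p \<noteq> 0}"
  then obtain n where "f (tk p n) \<noteq> 0" "g (dr Q p n) \<noteq> 0"
    using pmul_nz by blast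
  moreover have "p = (\<lambda>(q, r). (fst q, snd q @ snd r)) (tk p n, dr Q p n)" by simp
  ultimately show "p \<in> (\<lambda>(q, r). (fst q, snd q @ snd r)) ` ({q. f q \<noteq> 0} \<times> {r. g r \<noteq> 0})"
    by blast
qed

lemma palg_pmul: assumes "f \<in> palg Q" "g \<in> palg Q" shows "pmul Q f g \<in> palg Q"
proof (rule palgI)
  show "finite {p. pmul Q f g p \<noteq> 0}"
    using assms by (intro finite_subset[OF pmul_supp]) (auto dest: palg_fin)
  show "\<And>p. pmul Q f g p \<noteq> 0 \<Longrightarrow> is_path Q p" using pmul_nz by blast
qed

definition splitcl :: "('v,'e) quiver \<Rightarrow> ('v,'e) qpath set \<Rightarrow> bool" where
  "splitcl Q S \<longleftrightarrow> (\<forall>p\<in>S. is_path Q p \<longrightarrow> (\<forall>n\<le>length (snd p). tk p n \<in> S \<and> dr Q p n \<in> S))"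

definition vanish :: "('v,'e) quiver \<Rightarrow> ('v,'e) qpath set \<Rightarrow> (('v,'e) qpath \<Rightarrow> 'k::field) \<Rightarrow> nat \<Rightarrow> bool" where
  "vanish Q S f A \<longleftrightarrow> (\<forall>p\<in>S. is_path Q p \<longrightarrow> A < length (snd p) \<longrightarrow> f p = 0)"

context fixes Q :: "('v,'e) quiver" assumes wf: "wf_quiver Q"
begin

lemma vanish_mul:
  assumes S: "splitcl Q S" and f: "vanish Q S f A" and g: "vanish Q S g B"
  shows "vanish Q S (pmul Q f g) (A + B)"
  unfolding vanish_def
proof (intro ballI impI, rule ccontr)
  fix p assume p: "p \<in> S" "is_path Q p" "A + B < length (snd p)" "pmul Q f g p \<noteq> 0"
  then obtain n where n: "n \<le> length (snd p)" "f (tk p n) \<noteq> 0" "g (dr Q p n) \<noteq> 0"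
    using pmul_nz by blast
  have "tk p n \<in> S" "dr Q p n \<in> S" using S p n by (auto simp: splitcl_def)
  moreover have "is_path Q (tk p n)" "is_path Q (dr Q p n)" using path_split[OF wf p(2)] by auto
  note h = calculation this
  have "n \<le> A"
  proof (rule ccontr)
    assume "\<not> n \<le> A"
    then have "A < length (snd (tk p n))" using n(1) by simp
    then have "f (tk p n) = 0" using f h unfolding vanish_def by blast
    with n(2) show False by simp
  qed
  moreover have "length (snd p) - n \<le> B"
  proof (rule ccontr)
    assume "\<not> length (snd p) - n \<le> B"
    then have "B < length (snd (dr Q p n))" by simp
    then have "g (dr Q p n) = 0" using g h unfolding vanish_def by blast
    with n(3) show False by simp
  qed
  ultimately have "n \<le> A" "length (snd p) - n \<le> B" by auto
  then show False using p(3) by linarith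
qed

lemma top_mul:
  assumes S: "splitcl Q S" and f: "vanish Q S f A" and g: "vanish Q S g B"
    and w: "w \<in> S" "is_path Q w" "length (snd w) = A + B"
  shows "pmul Q f g w = f (tk w A) * g (dr Q w A)"
proof (rule pmul_single[OF w(2)])
  show "A \<le> length (snd w)" using w by simp
  fix n assume n: "n \<le> length (snd w)" "n \<noteq> A"
  have "tk w n \<in> S" "dr Q w n \<in> S" using S w n by (auto simp: splitcl_def)
  moreover have "is_path Q (tk w n)" "is_path Q (dr Q w n)" using path_split[OF wf w(2)] by auto
  ultimately show "f (tk w n) * g (dr Q w n) = 0"
  proof (cases "n < A")
    case True
    then have "B < length (drop n (snd w))" using w n by simp
    then show ?thesis using g \<open>dr Q w n \<in> S\<close> \<open>is_path Q (dr Q w n)\<close> by (simp add: vanish_def)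
  next
    case False
    then have "A < length (take n (snd w))" using w n by simp
    then show ?thesis using f \<open>tk w n \<in> S\<close> \<open>is_path Q (tk w n)\<close> by (simp add: vanish_def)
  qed
qed

lemma exists_top:
  assumes f: "f \<in> palg Q" and p0: "p0 \<in> S" "f p0 \<noteq> 0"
  shows "\<exists>L\<in>S. f L \<noteq> 0 \<and> vanish Q S f (length (snd L))"
proof -
  let ?X = "{p\<in>S. f p \<noteq> 0}"
  have fin: "finite ?X" using palg_fin[OF f] by (rule finite_subset[rotated]) auto
  have ne: "?X \<noteq> {}" using p0 by blast
  define m where "m = Max ((\<lambda>q. length (snd q)) ` ?X)"
  have "m \<in> (\<lambda>q. length (snd q)) ` ?X" unfolding m_def using fin ne by (intro Max_in) auto
  then obtain L where L: "L \<in> ?X" "length (snd L) = m" by blast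
  have "\<forall>q\<in>?X. length (snd q) \<le> m" unfolding m_def using fin by auto
  note mx = this
  have "vanish Q S f (length (snd L))" unfolding vanish_def
  proof (intro ballI impI)
    fix p assume p: "p \<in> S" "is_path Q p" "length (snd L) < length (snd p)"
    show "f p = 0"
    proof (rule ccontr)
      assume "f p \<noteq> 0"
      then have "p \<in> ?X" using p(1) by blast
      then have "length (snd p) \<le> m" using mx by blast
      then show False using p(3) L(2) by simp
    qed
  qed
  moreover have "L \<in> S" "f L \<noteq> 0" using L(1) by auto
  ultimately show ?thesis by blast
qed

lemma vanish_dl: "vanish Q S (dl h c) (length (snd h))"
  unfolding vanish_def dl_def by simp

end

lemma add_subgroup_add: "add_subgroup G \<Longrightarrow> x \<in> G \<Longrightarrow> y \<in> G \<Longrightarrow> x + y \<in> G"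
  unfolding add_subgroup_def by (metis diff_0 diff_minus_eq_add)
lemma add_subgroup_zero: "add_subgroup G \<Longrightarrow> 0 \<in> G"
  unfolding add_subgroup_def by blast
lemma add_subgroup_diff: "add_subgroup G \<Longrightarrow> x \<in> G \<Longrightarrow> y \<in> G \<Longrightarrow> x - y \<in> G"
  unfolding add_subgroup_def by blast

lemma decomp_aux:
  fixes G :: "(('v,'e) qpath \<Rightarrow> 'k::field) set"
  assumes G: "add_subgroup G" and X: "finite X"
  shows "\<forall>f. {p. f p \<noteq> 0} = X \<longrightarrow> (\<forall>p. f p \<noteq> 0 \<longrightarrow> dl p (f p) \<in> G) \<longrightarrow> f \<in> G"
  using X
proof (induction X rule: finite_induct)
  case empty
  show ?case
  proof (intro allI impI)
    fix f :: "('v,'e) qpath \<Rightarrow> 'k" assume "{p. f p \<noteq> 0} = {}"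
    then have "f = 0" by (auto simp: fun_eq_iff)
    then show "f \<in> G" using add_subgroup_zero[OF G] by simp
  qed
next
  case (insert q X)
  show ?case
  proof (intro allI impI)
    fix f :: "('v,'e) qpath \<Rightarrow> 'k"
    assume s: "{p. f p \<noteq> 0} = insert q X" and d: "\<forall>p. f p \<noteq> 0 \<longrightarrow> dl p (f p) \<in> G"
    define f' where "f' = f(q := 0)"
    have s': "{p. f' p \<noteq> 0} = X" using s insert(2) unfolding f'_def by auto
    have d': "\<forall>p. f' p \<noteq> 0 \<longrightarrow> dl p (f' p) \<in> G" using d unfolding f'_def by auto
    have "f' \<in> G" using insert(3) s' d' by blast
    moreover have "f q \<noteq> 0" using s by blast
    then have "dl q (f q) \<in> G" using d by blast
    moreover have "f = dl q (f q) + f'" unfolding f'_def dl_def by (auto simp: fun_eq_iff)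
    ultimately show "f \<in> G" using add_subgroup_add[OF G] by metis
  qed
qed

lemma decomp:
  fixes G :: "(('v,'e) qpath \<Rightarrow> 'k::field) set"
  assumes "add_subgroup G" "finite {p. f p \<noteq> 0}" "\<And>p. f p \<noteq> 0 \<Longrightarrow> dl p (f p) \<in> G"
  shows "f \<in> G"
  using decomp_aux[OF assms(1,2)] assms(3) by blast

lemma ideal_gen_sub: "r_ideal A mul J \<Longrightarrow> S \<subseteq> J \<Longrightarrow> ideal_gen A mul S \<subseteq> J"
  unfolding ideal_gen_def by blast
lemma ideal_gen_sup: "S \<subseteq> ideal_gen A mul S"
  unfolding ideal_gen_def by blast
lemma ideal_gen_eq: "r_ideal A mul J \<Longrightarrow> S = J \<Longrightarrow> ideal_gen A mul S = J"
  using ideal_gen_sub ideal_gen_sup by (metis subset_antisym order_refl)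

lemma g_ideal_gen_sub: "g_ideal M G tri J \<Longrightarrow> S \<subseteq> J \<Longrightarrow> g_ideal_gen M G tri S \<subseteq> J"
  unfolding g_ideal_gen_def by blast
lemma g_ideal_gen_sup: "S \<subseteq> g_ideal_gen M G tri S"
  unfolding g_ideal_gen_def by blast
lemma g_ideal_gen_eq: "g_ideal M G tri J \<Longrightarrow> S = J \<Longrightarrow> g_ideal_gen M G tri S = J"
  using g_ideal_gen_sub g_ideal_gen_sup by (metis subset_antisym order_refl)

lemma palg_subgroup: "add_subgroup (palg Q)"
  unfolding add_subgroup_def using palg_zero palg_diff by blast

lemma foldl_rep: "foldl f a (replicate (Suc k) y) = f (foldl f a (replicate k y)) y"
  by (induction k arbitrary: a) auto

definition Tset :: "('v,'e) quiver \<Rightarrow> 'v \<Rightarrow> ('v,'e) qpath set" where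
  "Tset Q i = {p. is_path Q p \<and> has_path Q i (fst p) \<and> has_path Q (pend Q p) i}"

definition Pall :: "('v,'e) quiver \<Rightarrow> ('v,'e) qpath set" where
  "Pall Q = {p. is_path Q p}"

context fixes Q :: "('v,'e) quiver" assumes wf: "wf_quiver Q"
begin

lemma splitcl_Pall: "splitcl Q (Pall Q)"
  unfolding splitcl_def Pall_def using path_split[OF wf] by blast

lemma splitcl_T: "splitcl Q (Tset Q i)"
  unfolding splitcl_def
proof (intro ballI impI allI)
  fix p n assume p: "p \<in> Tset Q i" "is_path Q p" "n \<le> length (snd p)"
  have a: "is_path Q (tk p n)" "is_path Q (dr Q p n)" "pend Q (dr Q p n) = pend Q p"
    using path_split[OF wf p(2)] by auto
  have h1: "has_path Q (fst (tk p n)) (pend Q (tk p n))" using has_path_path[OF wf a(1)] .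
  have h2: "has_path Q (fst (dr Q p n)) (pend Q (dr Q p n))" using has_path_path[OF wf a(2)] .
  have i1: "has_path Q i (fst p)" "has_path Q (pend Q p) i" using p(1) by (auto simp: Tset_def)
  have t1: "has_path Q (pend Q (tk p n)) i"
    using has_path_trans[OF wf, OF h2 i1(2)[folded a(3)]] by simp
  have h1': "has_path Q (fst p) (pend Q (tk p n))" using h1 by simp
  have t2: "has_path Q i (pend Q (tk p n))"
    using has_path_trans[OF wf, OF i1(1) h1'] by simp
  show "tk p n \<in> Tset Q i \<and> dr Q p n \<in> Tset Q i"
    unfolding Tset_def using a t1 t2 i1 by auto
qed

lemma kR_palg: "kR Q \<subseteq> palg Q" by (auto simp: kR_def)

lemma kR_ideal: "r_ideal (palg Q) (pmul Q) (kR Q :: (('v,'e) qpath \<Rightarrow> 'k::field) set)"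
  unfolding r_ideal_def
proof (intro conjI ballI)
  show "kR Q \<subseteq> palg Q" by (rule kR_palg)
  show "add_subgroup (kR Q :: (('v,'e) qpath \<Rightarrow> 'k::field) set)" unfolding add_subgroup_def
  proof (intro conjI ballI)
    show "0 \<in> (kR Q :: (('v,'e) qpath \<Rightarrow> 'k::field) set)" unfolding kR_def using palg_zero by simp
    fix x y :: "('v,'e) qpath \<Rightarrow> 'k" assume "x \<in> kR Q" "y \<in> kR Q"
    then have a: "x \<in> palg Q" "y \<in> palg Q" "\<forall>p. x p \<noteq> 0 \<longrightarrow> regular_path Q p"
      "\<forall>p. y p \<noteq> 0 \<longrightarrow> regular_path Q p" unfolding kR_def by blast+
    have "x - y \<in> palg Q" using palg_diff a(1,2) by blast
    moreover have "\<forall>p. (x - y) p \<noteq> 0 \<longrightarrow> regular_path Q p"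
    proof (intro allI impI)
      fix p assume "(x - y) p \<noteq> 0"
      then have "x p \<noteq> 0 \<or> y p \<noteq> 0" by auto
      then show "regular_path Q p" using a(3,4) by blast
    qed
    ultimately show "x - y \<in> kR Q" unfolding kR_def by blast
  qed
next
  fix a x :: "('v,'e) qpath \<Rightarrow> 'k" assume a: "a \<in> palg Q" and x: "x \<in> kR Q"
  have xp: "x \<in> palg Q" and xr: "\<And>p. x p \<noteq> 0 \<Longrightarrow> regular_path Q p" using x unfolding kR_def by blast+
  show "pmul Q a x \<in> kR Q" unfolding kR_def
  proof (intro CollectI conjI allI impI)
    show "pmul Q a x \<in> palg Q" using palg_pmul a xp by blast
    fix p assume "pmul Q a x p \<noteq> 0"
    then obtain n where ip: "is_path Q p" and n: "n \<le> length (snd p)" "a (tk p n) \<noteq> 0" "x (dr Q p n) \<noteq> 0"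
      using pmul_nz by blast
    have r: "regular_path Q (dr Q p n)" using xr[OF n(3)] .
    have s: "is_path Q (tk p n)" "pend Q (dr Q p n) = pend Q p" using path_split[OF wf ip] by auto
    have "snd p \<noteq> []" using r unfolding regular_path_def by auto
    moreover have "\<not> has_path Q (pend Q p) (fst p)"
    proof
      assume "has_path Q (pend Q p) (fst p)"
      moreover have "has_path Q (fst p) (pend Q (tk p n))" using has_path_path[OF wf s(1)] by simp
      ultimately have "has_path Q (pend Q p) (pend Q (tk p n))"
        by (rule has_path_trans[OF wf])
      then have "has_path Q (pend Q (dr Q p n)) (fst (dr Q p n))" using s(2) by simp
      then show False using r unfolding regular_path_def by blast
    qed
    ultimately show "regular_path Q p" using ip unfolding regular_path_def by blast
  qed
  show "pmul Q x a \<in> kR Q" unfolding kR_def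
  proof (intro CollectI conjI allI impI)
    show "pmul Q x a \<in> palg Q" using palg_pmul a xp by blast
    fix p assume "pmul Q x a p \<noteq> 0"
    then obtain n where ip: "is_path Q p" and n: "n \<le> length (snd p)" "x (tk p n) \<noteq> 0" "a (dr Q p n) \<noteq> 0"
      using pmul_nz by blast
    have r: "regular_path Q (tk p n)" using xr[OF n(2)] .
    have s: "is_path Q (dr Q p n)" "pend Q (dr Q p n) = pend Q p" using path_split[OF wf ip] by auto
    have "snd p \<noteq> []" using r unfolding regular_path_def by auto
    moreover have "\<not> has_path Q (pend Q p) (fst p)"
    proof
      assume "has_path Q (pend Q p) (fst p)"
      moreover have "has_path Q (pend Q (tk p n)) (pend Q p)" using has_path_path[OF wf s(1)] s(2) by simp
      ultimately have "has_path Q (pend Q (tk p n)) (fst p)"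
        using has_path_trans[OF wf] by blast
      then have "has_path Q (pend Q (tk p n)) (fst (tk p n))" by simp
      then show False using r unfolding regular_path_def by blast
    qed
    ultimately show "regular_path Q p" using ip unfolding regular_path_def by blast
  qed
qed

lemma kR_locnil: "r_locnil (pmul Q) (kR Q :: (('v,'e) qpath \<Rightarrow> 'k::field) set)"
  unfolding r_locnil_def
proof (intro allI impI)
  fix F :: "(('v,'e) qpath \<Rightarrow> 'k) set" assume F: "finite F \<and> F \<subseteq> kR Q"
  define W where "W = (\<Union>f\<in>F. pend Q ` {q. f q \<noteq> 0})"
  have "\<forall>f\<in>F. finite {q. f q \<noteq> 0}" using F kR_palg palg_fin by blast
  then have finW: "finite W" unfolding W_def using F by (intro finite_UN_I finite_imageI) auto
  define Ls where "Ls t = {v\<in>W. has_path Q v t}" for t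
  have finL: "finite (Ls t)" for t using finW unfolding Ls_def by auto
  have reg: "\<And>f p. f \<in> F \<Longrightarrow> f p \<noteq> 0 \<Longrightarrow> regular_path Q p" using F unfolding kR_def by blast
  have claim: "\<forall>p. foldl (pmul Q) x xs p \<noteq> 0 \<longrightarrow> length xs < card (Ls (pend Q p))"
    if x: "x \<in> F" and xs: "set xs \<subseteq> F" for x xs
    using xs
  proof (induction xs rule: rev_induct)
    case Nil
    show ?case
    proof (intro allI impI)
      fix p assume "foldl (pmul Q) x [] p \<noteq> 0"
      then have xp: "x p \<noteq> 0" by simp
      then have "is_path Q p" using reg x by (auto simp: regular_path_def)
      then have "pend Q p \<in> Ls (pend Q p)"
      proof -
        have "pend Q p \<in> pend Q ` {q. x q \<noteq> 0}" using xp by blast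
        then have "pend Q p \<in> W" unfolding W_def using x by blast
        then show ?thesis unfolding Ls_def using has_path_refl[OF wf] path_verts[OF wf \<open>is_path Q p\<close>] by blast
      qed
      then have "Ls (pend Q p) \<noteq> {}" by blast
      then have "card (Ls (pend Q p)) > 0" using finL[of "pend Q p"] by (simp add: card_gt_0_iff)
      then show "length [] < card (Ls (pend Q p))" by simp
    qed
  next
    case (snoc y xs)
    show ?case
    proof (intro allI impI)
      fix p assume "foldl (pmul Q) x (xs @ [y]) p \<noteq> 0"
      then have "pmul Q (foldl (pmul Q) x xs) y p \<noteq> 0" by simp
      then obtain n where ip: "is_path Q p" and n: "n \<le> length (snd p)"
        "foldl (pmul Q) x xs (tk p n) \<noteq> 0" "y (dr Q p n) \<noteq> 0"
        using pmul_nz by blast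
      have y: "y \<in> F" using snoc.prems by simp
      have xsF: "set xs \<subseteq> F" using snoc.prems by simp
      have IH: "length xs < card (Ls (pend Q (tk p n)))" using snoc.IH[OF xsF] n(2) by blast
      have r: "regular_path Q (dr Q p n)" using reg y n by blast
      have s: "is_path Q (dr Q p n)" "pend Q (dr Q p n) = pend Q p" using path_split[OF wf ip] by auto
      have hp: "has_path Q (pend Q (tk p n)) (pend Q p)" using has_path_path[OF wf s(1)] s(2) by simp
      have "Ls (pend Q (tk p n)) \<subseteq> Ls (pend Q p)" unfolding Ls_def using hp has_path_trans[OF wf] by blast
      moreover have "pend Q p \<in> Ls (pend Q p)"
      proof -
        have "dr Q p n \<in> {q. y q \<noteq> 0}" using n(3) by simp
        then have "pend Q p \<in> pend Q ` {q. y q \<noteq> 0}" using s(2) by (metis image_eqI)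
        then have "pend Q p \<in> W" unfolding W_def using y by blast
        then show ?thesis unfolding Ls_def using has_path_refl[OF wf] path_verts[OF wf ip] by blast
      qed
      moreover have "pend Q p \<notin> Ls (pend Q (tk p n))" unfolding Ls_def
        using r s by (auto simp: regular_path_def)
      ultimately have "Ls (pend Q (tk p n)) \<subset> Ls (pend Q p)" by blast
      then have "card (Ls (pend Q (tk p n))) < card (Ls (pend Q p))" using finL psubset_card_mono by blast
      then show "length (xs @ [y]) < card (Ls (pend Q p))" using IH by simp
    qed
  qed
  show "\<exists>n. \<forall>x xs. x \<in> F \<and> set xs \<subseteq> F \<and> length xs = n \<longrightarrow> foldl (pmul Q) x xs = 0"
  proof (intro exI allI impI)
    fix x xs assume a: "x \<in> F \<and> set xs \<subseteq> F \<and> length xs = card W"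
    show "foldl (pmul Q) x xs = 0"
    proof (rule ext, rule ccontr)
      fix p assume "foldl (pmul Q) x xs p \<noteq> 0 p"
      then have "foldl (pmul Q) x xs p \<noteq> 0" by simp
      moreover have "\<forall>p. foldl (pmul Q) x xs p \<noteq> 0 \<longrightarrow> length xs < card (Ls (pend Q p))"
        using claim[of x xs] a by blast
      ultimately have "length xs < card (Ls (pend Q p))" by blast
      moreover have "card (Ls (pend Q p)) \<le> card W" using finW unfolding Ls_def by (intro card_mono) auto
      ultimately show False using a by simp
    qed
  qed
qed

lemma kR_nil: "r_nil (pmul Q) (kR Q :: (('v,'e) qpath \<Rightarrow> 'k::field) set)"
  unfolding r_nil_def
proof
  fix x :: "('v,'e) qpath \<Rightarrow> 'k" assume x: "x \<in> kR Q"
  have "finite {x} \<and> {x} \<subseteq> kR Q" using x by simp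
  from kR_locnil[unfolded r_locnil_def, rule_format, OF this]
  obtain n where n: "\<forall>y ys. y \<in> {x} \<and> set ys \<subseteq> {x} \<and> length ys = n \<longrightarrow> foldl (pmul Q) y ys = 0"
    by blast
  have "set (replicate n x) \<subseteq> {x}" by auto
  then have "foldl (pmul Q) x (replicate n x) = 0" using n by simp
  then show "\<exists>n. foldl (pmul Q) x (replicate n x) = 0" by blast
qed

end

primrec cwp :: "'e list \<Rightarrow> nat \<Rightarrow> 'e list" where
  "cwp cs 0 = []"
| "cwp cs (Suc m) = cwp cs m @ cs"

lemma length_cwp: "length (cwp cs m) = m * length cs"
  by (induction m) auto

context fixes Q :: "('v,'e) quiver" assumes wf: "wf_quiver Q"
begin

lemma nonreg_T:
  assumes x: "x \<in> palg Q" "x \<notin> kR Q"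
  shows "\<exists>w. x w \<noteq> 0 \<and> w \<in> Tset Q (fst w)"
proof -
  obtain w where w: "x w \<noteq> 0" "\<not> regular_path Q w" using x unfolding kR_def by blast
  have ip: "is_path Q w" using palg_path[OF x(1) w(1)] .
  have v: "fst w \<in> verts Q" using path_verts[OF wf ip] by blast
  have "has_path Q (pend Q w) (fst w)"
  proof (cases "snd w = []")
    case True
    then have "pend Q w = fst w" by (simp add: pend_def)
    then show ?thesis using has_path_refl[OF wf v] by simp
  next
    case False
    then show ?thesis using w(2) ip unfolding regular_path_def by blast
  qed
  then have "w \<in> Tset Q (fst w)" unfolding Tset_def using ip has_path_refl[OF wf v] by blast
  then show ?thesis using w(1) by blast
qed

lemma cycle_setup:
  assumes x: "x \<in> palg Q" "x \<notin> kR Q"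
  shows "\<exists>i L hs. L \<in> Tset Q i \<and> x L \<noteq> 0 \<and> vanish Q (Tset Q i) x (length (snd L)) \<and>
     is_path Q (pend Q L, hs) \<and> pend Q (pend Q L, hs) = fst L"
proof -
  obtain w where w: "x w \<noteq> 0" "w \<in> Tset Q (fst w)" using nonreg_T[OF x] by blast
  obtain L where L: "L \<in> Tset Q (fst w)" "x L \<noteq> 0" "vanish Q (Tset Q (fst w)) x (length (snd L))"
    using exists_top[OF wf x(1) w(2) w(1)] by blast
  have "has_path Q (pend Q L) (fst w)" "has_path Q (fst w) (fst L)" using L(1) unfolding Tset_def by blast+
  then have "has_path Q (pend Q L) (fst L)" by (rule has_path_trans[OF wf])
  then obtain hs where "is_path Q (pend Q L, hs)" "pend Q (pend Q L, hs) = fst L"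
    unfolding has_path_iff[OF wf] by blast
  then show ?thesis using L by blast
qed

lemma T_fst: "p \<in> Tset Q i \<Longrightarrow> has_path Q i (fst p)" unfolding Tset_def by blast
lemma T_pend: "p \<in> Tset Q i \<Longrightarrow> has_path Q (pend Q p) i" unfolding Tset_def by blast
lemma T_path: "p \<in> Tset Q i \<Longrightarrow> is_path Q p" unfolding Tset_def by blast
lemma TI: "is_path Q p \<Longrightarrow> has_path Q i (fst p) \<Longrightarrow> has_path Q (pend Q p) i \<Longrightarrow> p \<in> Tset Q i"
  unfolding Tset_def by blast

lemma cycle_elem:
  fixes x :: "('v,'e) qpath \<Rightarrow> 'a::field"
  assumes I: "r_ideal (palg Q) (pmul Q) I" and xI: "x \<in> I" and xk: "x \<notin> kR Q"
  shows "\<exists>i u cs y. y \<in> I \<and> (u, cs) \<in> Tset Q i \<and> pend Q (u, cs) = u \<and>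
     vanish Q (Tset Q i) y (length cs) \<and> y (u, cs) \<noteq> 0 \<and> (\<forall>p. y p \<noteq> 0 \<longrightarrow> pend Q p = u)"
proof -
  have x: "x \<in> palg Q" using I xI unfolding r_ideal_def by blast
  obtain i L hs where L: "L \<in> Tset Q i" "x L \<noteq> 0" "vanish Q (Tset Q i) x (length (snd L))"
    and h: "is_path Q (pend Q L, hs)" "pend Q (pend Q L, hs) = fst L"
    using cycle_setup[OF x xk] by blast
  define u where "u = fst L"
  define cs where "cs = snd L @ hs"
  define hh where "hh = (pend Q L, hs)"
  define y where "y = pmul Q x (dl hh 1)"
  have Lp: "is_path Q (u, snd L)" using T_path[OF L(1)] unfolding u_def by simp
  have pL: "pend Q (u, snd L) = pend Q L" unfolding u_def by simp
  have cp: "is_path Q (u, cs)" unfolding cs_def using is_path_append[OF wf] Lp h(1) pL by simp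
  have pc: "pend Q (u, cs) = u" unfolding cs_def using pend_append[of Q u "snd L" hs] pL h(2) u_def by simp
  have iu: "has_path Q i u" using T_fst[OF L(1)] unfolding u_def .
  have "has_path Q u (pend Q L)" using has_path_path[OF wf T_path[OF L(1)]] unfolding u_def .
  then have ui: "has_path Q u i" using T_pend[OF L(1)] has_path_trans[OF wf] by blast
  have cT: "(u, cs) \<in> Tset Q i" using TI[OF cp] iu ui pc by simp
  have yI: "y \<in> I" unfolding y_def using I xI palg_dl[OF h(1)] unfolding r_ideal_def hh_def by blast
  have van: "vanish Q (Tset Q i) y (length cs)" unfolding y_def cs_def
    using vanish_mul[OF wf splitcl_T[OF wf] L(3) vanish_dl[OF wf, of "Tset Q i" hh 1]] unfolding hh_def by simp
  have "y (u, cs) = x (tk (u, cs) (length (snd L))) * dl hh 1 (dr Q (u, cs) (length (snd L)))"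
    unfolding y_def
    by (rule top_mul[OF wf splitcl_T[OF wf] L(3) vanish_dl[OF wf] cT cp]) (simp add: cs_def hh_def)
  also have "\<dots> = x L" unfolding cs_def hh_def dl_def u_def by simp
  finally have yc: "y (u, cs) \<noteq> 0" using L(2) by simp
  have ye: "\<forall>p. y p \<noteq> 0 \<longrightarrow> pend Q p = u"
  proof (intro allI impI)
    fix p assume "y p \<noteq> 0"
    then have "pmul Q x (dl hh 1) p \<noteq> 0" unfolding y_def .
    from pmul_nz[OF this] obtain n where ip: "is_path Q p" and n: "dl hh 1 (dr Q p n) \<noteq> (0::'a)"
      by blast
    have "dr Q p n = hh" using n unfolding dl_def by (auto split: if_splits)
    then have "pend Q (dr Q p n) = u" using h(2) unfolding hh_def u_def by simp
    then show "pend Q p = u" using path_split(3)[OF wf ip] by simp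
  qed
  show ?thesis using yI cT pc van yc ye by blast
qed

lemma not_nil_ideal:
  assumes I: "r_ideal (palg Q) (pmul Q) I" and xI: "x \<in> I" and xk: "x \<notin> kR Q"
  shows "\<exists>y\<in>I. \<forall>n. foldl (pmul Q) y (replicate n y) \<noteq> 0"
proof -
  obtain i u cs y where yI: "y \<in> I" and cT: "(u, cs) \<in> Tset Q i" and pc: "pend Q (u, cs) = u"
    and van: "vanish Q (Tset Q i) y (length cs)" and yc: "y (u, cs) \<noteq> 0"
    using cycle_elem[OF I xI xk] by blast
  define K where "K = length cs"
  have cp: "is_path Q (u, cs)" using T_path[OF cT] .
  have iu: "has_path Q i u" using T_fst[OF cT] by simp
  have ui: "has_path Q u i" using T_pend[OF cT] pc by simp
  have uv: "u \<in> verts Q" using path_verts[OF wf cp] by simp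
  have pw: "is_path Q (u, cwp cs k) \<and> pend Q (u, cwp cs k) = u" for k
  proof (induction k)
    case 0 then show ?case using uv by simp
  next
    case (Suc k)
    then show ?case using is_path_append[OF wf, of u "cwp cs k" cs] cp pc
      pend_append[of Q u "cwp cs k" cs] by simp
  qed
  have pT: "(u, cwp cs k) \<in> Tset Q i" for k using TI pw[of k] iu ui by simp
  have claim: "vanish Q (Tset Q i) (foldl (pmul Q) y (replicate k y)) (Suc k * K) \<and>
     foldl (pmul Q) y (replicate k y) (u, cwp cs (Suc k)) = y (u, cs) ^ Suc k" for k
  proof (induction k)
    case 0 then show ?case using van unfolding K_def by simp
  next
    case (Suc k)
    let ?z = "foldl (pmul Q) y (replicate k y)"
    have eq: "foldl (pmul Q) y (replicate (Suc k) y) = pmul Q ?z y" by (rule foldl_rep)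
    have v1: "vanish Q (Tset Q i) (pmul Q ?z y) (Suc k * K + K)"
      using vanish_mul[OF wf splitcl_T[OF wf] Suc.IH[THEN conjunct1] van[folded K_def]] .
    have "pmul Q ?z y (u, cwp cs (Suc (Suc k))) =
        ?z (tk (u, cwp cs (Suc (Suc k))) (Suc k * K)) * y (dr Q (u, cwp cs (Suc (Suc k))) (Suc k * K))"
      by (rule top_mul[OF wf splitcl_T[OF wf] Suc.IH[THEN conjunct1] van[folded K_def] pT])
        (use pw[of "Suc (Suc k)"] in \<open>simp_all add: length_cwp K_def\<close>)
    also have "\<dots> = ?z (u, cwp cs (Suc k)) * y (u, cs)"
      using pw[of "Suc k"] by (simp add: length_cwp K_def)
    also have "\<dots> = y (u, cs) ^ Suc (Suc k)" using Suc.IH by simp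
    finally show ?case using eq v1 by (simp add: algebra_simps)
  qed
  have "\<forall>n. foldl (pmul Q) y (replicate n y) \<noteq> 0"
  proof (intro allI notI)
    fix n assume "foldl (pmul Q) y (replicate n y) = 0"
    then have "y (u, cs) ^ Suc n = 0" using claim[of n] by simp
    then show False using yc by simp
  qed
  then show ?thesis using yI by blast
qed

end

definition Pid :: "('v,'e) quiver \<Rightarrow> 'v \<Rightarrow> (('v,'e) qpath \<Rightarrow> 'k::field) set" where
  "Pid Q i = {f \<in> palg Q. \<forall>p\<in>Tset Q i. f p = 0}"

definition Bp :: "('v,'e) quiver \<Rightarrow> ('v,'e) qpath \<Rightarrow> (('v,'e) qpath \<Rightarrow> 'k::field) set" where
  "Bp Q p0 = {f \<in> palg Q. \<forall>q. f q \<noteq> 0 \<longrightarrow> has_path Q (fst q) (fst p0) \<and> has_path Q (pend Q p0) (pend Q q)}"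

context fixes Q :: "('v,'e) quiver" assumes wf: "wf_quiver Q"
begin

lemma palg_ideal: "r_ideal (palg Q) (pmul Q) (palg Q :: (('v,'e) qpath \<Rightarrow> 'k::field) set)"
  unfolding r_ideal_def using palg_subgroup palg_pmul by blast

lemma palg_prime: "r_prime (palg Q) (pmul Q) (palg Q :: (('v,'e) qpath \<Rightarrow> 'k::field) set)"
  unfolding r_prime_def using palg_ideal unfolding r_ideal_def by blast

lemma Pid_ideal: "r_ideal (palg Q) (pmul Q) (Pid Q i :: (('v,'e) qpath \<Rightarrow> 'k::field) set)"
  unfolding r_ideal_def
proof (intro conjI ballI)
  show "Pid Q i \<subseteq> palg Q" unfolding Pid_def by blast
  show "add_subgroup (Pid Q i :: (('v,'e) qpath \<Rightarrow> 'k::field) set)" unfolding add_subgroup_def Pid_def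
    using palg_zero palg_diff by auto
next
  fix a x :: "('v,'e) qpath \<Rightarrow> 'k" assume a: "a \<in> palg Q" and x: "x \<in> Pid Q i"
  have xp: "x \<in> palg Q" and xz: "\<And>p. p \<in> Tset Q i \<Longrightarrow> x p = 0" using x unfolding Pid_def by blast+
  have "\<forall>p\<in>Tset Q i. pmul Q a x p = 0"
  proof (intro ballI, rule ccontr)
    fix p assume p: "p \<in> Tset Q i" "pmul Q a x p \<noteq> 0"
    from pmul_nz[OF p(2)] obtain n where ip: "is_path Q p" and n: "n \<le> length (snd p)" "x (dr Q p n) \<noteq> 0"
      by blast
    have "dr Q p n \<in> Tset Q i" using splitcl_T[OF wf] p(1) ip n(1) unfolding splitcl_def by blast
    then show False using xz n(2) by blast
  qed
  then show "pmul Q a x \<in> Pid Q i" unfolding Pid_def using palg_pmul a xp by blast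
  have "\<forall>p\<in>Tset Q i. pmul Q x a p = 0"
  proof (intro ballI, rule ccontr)
    fix p assume p: "p \<in> Tset Q i" "pmul Q x a p \<noteq> 0"
    from pmul_nz[OF p(2)] obtain n where ip: "is_path Q p" and n: "n \<le> length (snd p)" "x (tk p n) \<noteq> 0"
      by blast
    have "tk p n \<in> Tset Q i" using splitcl_T[OF wf] p(1) ip n(1) unfolding splitcl_def by blast
    then show False using xz n(2) by blast
  qed
  then show "pmul Q x a \<in> Pid Q i" unfolding Pid_def using palg_pmul a xp by blast
qed

lemma Pid_prime: "r_prime (palg Q) (pmul Q) (Pid Q i :: (('v,'e) qpath \<Rightarrow> 'k::field) set)"
  unfolding r_prime_def
proof (intro conjI allI impI)
  show "r_ideal (palg Q) (pmul Q) (Pid Q i :: (('v,'e) qpath \<Rightarrow> 'k::field) set)" by (rule Pid_ideal)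
  fix B C :: "(('v,'e) qpath \<Rightarrow> 'k) set"
  assume H: "r_ideal (palg Q) (pmul Q) B \<and> r_ideal (palg Q) (pmul Q) C \<and> (\<forall>b\<in>B. \<forall>c\<in>C. pmul Q b c \<in> Pid Q i)"
  show "B \<subseteq> Pid Q i \<or> C \<subseteq> Pid Q i"
  proof (rule ccontr)
    assume "\<not> (B \<subseteq> Pid Q i \<or> C \<subseteq> Pid Q i)"
    then obtain b c where b: "b \<in> B" "b \<notin> Pid Q i" and c: "c \<in> C" "c \<notin> Pid Q i" by blast
    have bp: "b \<in> palg Q" using H b(1) unfolding r_ideal_def by blast
    have cp: "c \<in> palg Q" using H c(1) unfolding r_ideal_def by blast
    obtain p1 where p1: "p1 \<in> Tset Q i" "b p1 \<noteq> 0" using b bp unfolding Pid_def by blast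
    obtain p2 where p2: "p2 \<in> Tset Q i" "c p2 \<noteq> 0" using c cp unfolding Pid_def by blast
    obtain L where L: "L \<in> Tset Q i" "b L \<noteq> 0" "vanish Q (Tset Q i) b (length (snd L))"
      using exists_top[OF wf bp p1] by blast
    obtain M where M: "M \<in> Tset Q i" "c M \<noteq> 0" "vanish Q (Tset Q i) c (length (snd M))"
      using exists_top[OF wf cp p2] by blast
    have "has_path Q (pend Q L) i" "has_path Q i (fst M)" using L(1) M(1) by (simp_all add: T_pend[OF wf] T_fst[OF wf])
    then have "has_path Q (pend Q L) (fst M)" by (rule has_path_trans[OF wf])
    then obtain hs where h: "is_path Q (pend Q L, hs)" "pend Q (pend Q L, hs) = fst M"
      unfolding has_path_iff[OF wf] by blast
    define hh where "hh = (pend Q L, hs)"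
    define e1 where "e1 = (dl hh 1 :: ('v,'e) qpath \<Rightarrow> 'k)"
    define b' where "b' = pmul Q b e1"
    have b'B: "b' \<in> B" unfolding b'_def e1_def using H b(1) palg_dl[OF h(1)] unfolding r_ideal_def hh_def by blast
    have Lp: "is_path Q L" using T_path[OF wf L(1)] .
    have Mp: "is_path Q M" using T_path[OF wf M(1)] .
    define w1 where "w1 = (fst L, snd L @ hs)"
    define w where "w = (fst L, snd L @ hs @ snd M)"
    have pL: "pend Q (fst L, snd L) = pend Q L" by simp
    have w1p: "is_path Q w1" unfolding w1_def using is_path_append[OF wf, of "fst L" "snd L" hs] Lp h(1) by simp
    have pw1: "pend Q w1 = fst M" unfolding w1_def using pend_append[of Q "fst L" "snd L" hs] h(2) by simp
    have wp: "is_path Q w" unfolding w_def using is_path_append[OF wf, of "fst L" "snd L @ hs" "snd M"]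
        w1p pw1 Mp unfolding w1_def by simp
    have pw: "pend Q w = pend Q M" unfolding w_def using pend_append[of Q "fst L" "snd L @ hs" "snd M"]
        pw1 unfolding w1_def by simp
    have wT: "w \<in> Tset Q i" using TI[OF wf wp] T_fst[OF wf L(1)] T_pend[OF wf M(1)] pw unfolding w_def by simp
    have w1T: "w1 \<in> Tset Q i" using splitcl_T[OF wf] wT wp unfolding splitcl_def w_def w1_def
      by (metis (no_types, lifting) append.assoc append_eq_conv_conj fst_conv le_add1 length_append snd_conv)
    have vb': "vanish Q (Tset Q i) b' (length (snd L) + length hs)" unfolding b'_def e1_def
      using vanish_mul[OF wf splitcl_T[OF wf] L(3) vanish_dl[OF wf, of "Tset Q i" hh 1]] unfolding hh_def by simp
    have b'w1: "b' w1 = b L"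
    proof -
      have "b' w1 = b (tk w1 (length (snd L))) * e1 (dr Q w1 (length (snd L)))"
        unfolding b'_def e1_def
        by (rule top_mul[OF wf splitcl_T[OF wf] L(3) vanish_dl[OF wf] w1T w1p]) (simp add: w1_def hh_def)
      also have "\<dots> = b L" unfolding w1_def e1_def hh_def dl_def by simp
      finally show ?thesis .
    qed
    have "pmul Q b' c w = b' (tk w (length (snd L) + length hs)) * c (dr Q w (length (snd L) + length hs))"
      by (rule top_mul[OF wf splitcl_T[OF wf] vb' M(3) wT wp]) (simp add: w_def)
    also have "\<dots> = b' w1 * c M"
    proof -
      have "tk w (length (snd L) + length hs) = w1" unfolding w_def w1_def by simp
      moreover have "dr Q w (length (snd L) + length hs) = M" unfolding w_def
        using pw1 unfolding w1_def by simp
      ultimately show ?thesis by simp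
    qed
    finally have "pmul Q b' c w \<noteq> 0" using b'w1 L(2) M(2) by simp
    moreover have "pmul Q b' c \<in> Pid Q i" using H b'B c(1) by blast
    ultimately show False using wT unfolding Pid_def by blast
  qed
qed

lemma baer_sub_kR: "baer_rad (palg Q) (pmul Q) \<subseteq> (kR Q :: (('v,'e) qpath \<Rightarrow> 'k::field) set)"
proof
  fix x :: "('v,'e) qpath \<Rightarrow> 'k" assume x: "x \<in> baer_rad (palg Q) (pmul Q)"
  have xp: "x \<in> palg Q" using x palg_prime unfolding baer_rad_def by blast
  show "x \<in> kR Q"
  proof (rule ccontr)
    assume "x \<notin> kR Q"
    then obtain w where w: "x w \<noteq> 0" "w \<in> Tset Q (fst w)" using nonreg_T[OF wf xp] by blast
    have "x \<in> Pid Q (fst w)" using x Pid_prime unfolding baer_rad_def by blast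
    then show False using w unfolding Pid_def by blast
  qed
qed

lemma Bp_ideal:
  assumes p0: "regular_path Q p0"
  shows "r_ideal (palg Q) (pmul Q) (Bp Q p0 :: (('v,'e) qpath \<Rightarrow> 'k::field) set)"
  unfolding r_ideal_def
proof (intro conjI ballI)
  show "Bp Q p0 \<subseteq> palg Q" unfolding Bp_def by blast
  show "add_subgroup (Bp Q p0 :: (('v,'e) qpath \<Rightarrow> 'k::field) set)" unfolding add_subgroup_def
  proof (intro conjI ballI)
    show "0 \<in> (Bp Q p0 :: (('v,'e) qpath \<Rightarrow> 'k::field) set)" unfolding Bp_def using palg_zero by simp
    fix x y :: "('v,'e) qpath \<Rightarrow> 'k" assume xy: "x \<in> Bp Q p0" "y \<in> Bp Q p0"
    have "x - y \<in> palg Q" using xy palg_diff unfolding Bp_def by blast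
    moreover have "\<forall>q. (x - y) q \<noteq> 0 \<longrightarrow> has_path Q (fst q) (fst p0) \<and> has_path Q (pend Q p0) (pend Q q)"
    proof (intro allI impI)
      fix q assume "(x - y) q \<noteq> 0"
      then have "x q \<noteq> 0 \<or> y q \<noteq> 0" by auto
      then show "has_path Q (fst q) (fst p0) \<and> has_path Q (pend Q p0) (pend Q q)"
        using xy unfolding Bp_def by blast
    qed
    ultimately show "x - y \<in> Bp Q p0" unfolding Bp_def by blast
  qed
next
  fix a x :: "('v,'e) qpath \<Rightarrow> 'k" assume a: "a \<in> palg Q" and x: "x \<in> Bp Q p0"
  have xp: "x \<in> palg Q" and xr: "\<And>q. x q \<noteq> 0 \<Longrightarrow> has_path Q (fst q) (fst p0) \<and> has_path Q (pend Q p0) (pend Q q)"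
    using x unfolding Bp_def by blast+
  have "\<forall>q. pmul Q a x q \<noteq> 0 \<longrightarrow> has_path Q (fst q) (fst p0) \<and> has_path Q (pend Q p0) (pend Q q)"
  proof (intro allI impI)
    fix q assume "pmul Q a x q \<noteq> 0"
    from pmul_nz[OF this] obtain n where ip: "is_path Q q" and n: "x (dr Q q n) \<noteq> 0" by blast
    have s: "is_path Q (tk q n)" "pend Q (dr Q q n) = pend Q q" using path_split[OF wf ip] by auto
    have h1: "has_path Q (fst q) (pend Q (tk q n))" using has_path_path[OF wf s(1)] by simp
    have h2: "has_path Q (pend Q (tk q n)) (fst p0)" using xr[OF n] by simp
    have "has_path Q (fst q) (fst p0)" using has_path_trans[OF wf h1 h2] .
    moreover have "has_path Q (pend Q p0) (pend Q q)" using xr[OF n] s(2) by simp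
    ultimately show "has_path Q (fst q) (fst p0) \<and> has_path Q (pend Q p0) (pend Q q)" by blast
  qed
  then show "pmul Q a x \<in> Bp Q p0" unfolding Bp_def using palg_pmul a xp by blast
  have "\<forall>q. pmul Q x a q \<noteq> 0 \<longrightarrow> has_path Q (fst q) (fst p0) \<and> has_path Q (pend Q p0) (pend Q q)"
  proof (intro allI impI)
    fix q assume "pmul Q x a q \<noteq> 0"
    from pmul_nz[OF this] obtain n where ip: "is_path Q q" and n: "x (tk q n) \<noteq> 0" by blast
    have s: "is_path Q (dr Q q n)" "pend Q (dr Q q n) = pend Q q" using path_split[OF wf ip] by auto
    have h1: "has_path Q (pend Q (tk q n)) (pend Q q)" using has_path_path[OF wf s(1)] s(2) by simp
    have h2: "has_path Q (pend Q p0) (pend Q (tk q n))" using xr[OF n] by simp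
    have "has_path Q (pend Q p0) (pend Q q)" using has_path_trans[OF wf h2 h1] .
    moreover have "has_path Q (fst q) (fst p0)" using xr[OF n] by simp
    ultimately show "has_path Q (fst q) (fst p0) \<and> has_path Q (pend Q p0) (pend Q q)" by blast
  qed
  then show "pmul Q x a \<in> Bp Q p0" unfolding Bp_def using palg_pmul a xp by blast
qed

lemma Bp_sq:
  assumes p0: "regular_path Q p0" and b: "b \<in> Bp Q p0" "c \<in> Bp Q p0"
  shows "pmul Q b c = 0"
proof (rule ext, rule ccontr)
  fix q assume "pmul Q b c q \<noteq> 0 q"
  then have "pmul Q b c q \<noteq> 0" by simp
  from pmul_nz[OF this] obtain n where ip: "is_path Q q" and n: "b (tk q n) \<noteq> 0" "c (dr Q q n) \<noteq> 0" by blast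
  have "has_path Q (pend Q p0) (pend Q (tk q n))" using b(1) n(1) unfolding Bp_def by blast
  moreover have "has_path Q (fst (dr Q q n)) (fst p0)" using b(2) n(2) unfolding Bp_def by blast
  ultimately have "has_path Q (pend Q p0) (fst p0)" using has_path_trans[OF wf] by simp
  then show False using p0 unfolding regular_path_def by blast
qed

lemma kR_sub_prime:
  assumes P: "r_prime (palg Q) (pmul Q) P"
  shows "(kR Q :: (('v,'e) qpath \<Rightarrow> 'k::field) set) \<subseteq> P"
proof
  fix x :: "('v,'e) qpath \<Rightarrow> 'k" assume x: "x \<in> kR Q"
  have Pi: "r_ideal (palg Q) (pmul Q) P" using P unfolding r_prime_def by blast
  have Ps: "add_subgroup P" using Pi unfolding r_ideal_def by blast
  show "x \<in> P"
  proof (rule decomp[OF Ps])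
    show "finite {p. x p \<noteq> 0}" using x unfolding kR_def palg_def by blast
    fix p assume xp: "x p \<noteq> 0"
    have r: "regular_path Q p" using x xp unfolding kR_def by blast
    have ip: "is_path Q p" using r unfolding regular_path_def by blast
    have vv: "fst p \<in> verts Q" "pend Q p \<in> verts Q" using path_verts[OF wf ip] by blast+
    have "\<forall>b\<in>Bp Q p. \<forall>c\<in>Bp Q p. pmul Q b c \<in> P"
    proof (intro ballI)
      fix b c :: "('v,'e) qpath \<Rightarrow> 'k" assume "b \<in> Bp Q p" "c \<in> Bp Q p"
      then have "pmul Q b c = 0" by (rule Bp_sq[OF r])
      then show "pmul Q b c \<in> P" using add_subgroup_zero[OF Ps] by simp
    qed
    then have "Bp Q p \<subseteq> P \<or> Bp Q p \<subseteq> P" using P Bp_ideal[OF r] unfolding r_prime_def by blast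
    moreover have "dl p (x p) \<in> Bp Q p"
      unfolding Bp_def using palg_dl[OF ip] has_path_refl[OF wf] vv by (auto simp: dl_def)
    ultimately show "dl p (x p) \<in> P" by blast
  qed
qed

lemma baer_eq: "baer_rad (palg Q) (pmul Q) = (kR Q :: (('v,'e) qpath \<Rightarrow> 'k::field) set)"
  using baer_sub_kR kR_sub_prime unfolding baer_rad_def by blast

end

primrec rpow :: "('v,'e) quiver \<Rightarrow> (('v,'e) qpath \<Rightarrow> 'k::field) \<Rightarrow> nat \<Rightarrow> (('v,'e) qpath \<Rightarrow> 'k)" where
  "rpow Q a 0 = a"
| "rpow Q a (Suc k) = pmul Q a (rpow Q a k)"

lemma telescope:
  fixes r :: "nat \<Rightarrow> 'k::field"
  shows "r 0 + (\<Sum>k<m. (-1)^(Suc k) * r k) + (\<Sum>k<m. (-1)^(Suc k) * r (Suc k)) = (-1)^m * r m"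
  by (induction m) (auto simp: algebra_simps)

context fixes Q :: "('v,'e) quiver" assumes wf: "wf_quiver Q"
begin

lemma rpow_palg: "a \<in> palg Q \<Longrightarrow> rpow Q a k \<in> palg Q"
  by (induction k) (auto intro: palg_pmul)

lemma rpow_chain:
  assumes a: "a \<in> kR Q"
  shows "rpow Q a k p \<noteq> 0 \<Longrightarrow> k < card {v \<in> fst ` {q. a q \<noteq> 0}. has_path Q (fst p) v}"
proof (induction k arbitrary: p)
  let ?V = "fst ` {q. a q \<noteq> 0}"
  define Rs where "Rs s = {v \<in> ?V. has_path Q s v}" for s
  have finV: "finite ?V" using a unfolding kR_def palg_def by blast
  have finR: "finite (Rs s)" for s using finV unfolding Rs_def by auto
  have reg: "\<And>q. a q \<noteq> 0 \<Longrightarrow> regular_path Q q" using a unfolding kR_def by blast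
  {
    case 0
    then have ap: "a p \<noteq> 0" by simp
    then have ip: "is_path Q p" using reg unfolding regular_path_def by blast
    have "fst p \<in> Rs (fst p)" unfolding Rs_def using ap has_path_refl[OF wf] path_verts[OF wf ip] by blast
    then have "Rs (fst p) \<noteq> {}" by blast
    then have "card (Rs (fst p)) > 0" using finR by (simp add: card_gt_0_iff)
    then show ?case unfolding Rs_def by simp
  next
    case (Suc k)
    then have "pmul Q a (rpow Q a k) p \<noteq> 0" by simp
    from pmul_nz[OF this] obtain n where ip: "is_path Q p" and n: "a (tk p n) \<noteq> 0" "rpow Q a k (dr Q p n) \<noteq> 0"
      by blast
    have IH: "k < card (Rs (pend Q (tk p n)))" using Suc.IH[OF n(2)] unfolding Rs_def by simp
    have r: "regular_path Q (tk p n)" using reg n(1) .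
    have s: "is_path Q (tk p n)" using path_split[OF wf ip] by blast
    have hp: "has_path Q (fst p) (pend Q (tk p n))" using has_path_path[OF wf s] by simp
    have "Rs (pend Q (tk p n)) \<subseteq> Rs (fst p)" unfolding Rs_def using hp has_path_trans[OF wf] by blast
    moreover have "fst p \<in> Rs (fst p)"
    proof -
      have "fst (tk p n) \<in> ?V" using n(1) by blast
      then show ?thesis unfolding Rs_def using has_path_refl[OF wf] path_verts[OF wf ip] by simp
    qed
    moreover have "fst p \<notin> Rs (pend Q (tk p n))" unfolding Rs_def using r unfolding regular_path_def by simp
    ultimately have "Rs (pend Q (tk p n)) \<subset> Rs (fst p)" by blast
    then have "card (Rs (pend Q (tk p n))) < card (Rs (fst p))" using finR psubset_card_mono by blast
    then show ?case using IH unfolding Rs_def by simp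
  }
qed

lemma rpow_zero:
  assumes a: "a \<in> kR Q"
  shows "rpow Q a (card (fst ` {q. a q \<noteq> 0})) = 0"
proof (rule ext, rule ccontr)
  fix p assume "rpow Q a (card (fst ` {q. a q \<noteq> 0})) p \<noteq> 0 p"
  then have "card (fst ` {q. a q \<noteq> 0}) < card {v \<in> fst ` {q. a q \<noteq> 0}. has_path Q (fst p) v}"
    using rpow_chain[OF a] by simp
  moreover have "card {v \<in> fst ` {q. a q \<noteq> 0}. has_path Q (fst p) v} \<le> card (fst ` {q. a q \<noteq> 0})"
    using a unfolding kR_def palg_def by (intro card_mono) auto
  ultimately show False by simp
qed

lemma kR_qreg: "r_qreg (palg Q) (pmul Q) (kR Q :: (('v,'e) qpath \<Rightarrow> 'k::field) set)"
  unfolding r_qreg_def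
proof
  fix a :: "('v,'e) qpath \<Rightarrow> 'k" assume a: "a \<in> kR Q"
  have ap: "a \<in> palg Q" using a unfolding kR_def by blast
  define m where "m = card (fst ` {q. a q \<noteq> 0})"
  define b where "b = (\<lambda>p. \<Sum>k<m. (-1)^(Suc k) * rpow Q a k p)"
  have bp: "b \<in> palg Q"
  proof (rule palgI)
    have "{p. b p \<noteq> 0} \<subseteq> (\<Union>k<m. {p. rpow Q a k p \<noteq> 0})"
    proof
      fix p assume "p \<in> {p. b p \<noteq> 0}"
      then have "(\<Sum>k<m. (-1)^(Suc k) * rpow Q a k p) \<noteq> 0" unfolding b_def by simp
      then obtain k where "k < m" "(-1)^(Suc k) * rpow Q a k p \<noteq> 0" by (meson lessThan_iff sum.neutral)
      then show "p \<in> (\<Union>k<m. {p. rpow Q a k p \<noteq> 0})" by auto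
    qed
    moreover have "finite (\<Union>k<m. {p. rpow Q a k p \<noteq> 0})"
      using rpow_palg[OF ap] palg_fin by blast
    ultimately show "finite {p. b p \<noteq> 0}" by (rule finite_subset)
    fix p assume "b p \<noteq> 0"
    then have "(\<Sum>k<m. (-1)^(Suc k) * rpow Q a k p) \<noteq> 0" unfolding b_def by simp
    then obtain k where "(-1)^(Suc k) * rpow Q a k p \<noteq> 0" by (meson sum.neutral)
    then have "rpow Q a k p \<noteq> 0" by auto
    then show "is_path Q p" using palg_path[OF rpow_palg[OF ap]] by blast
  qed
  have ab: "pmul Q a b p = (\<Sum>k<m. (-1)^(Suc k) * rpow Q a (Suc k) p)" for p
  proof (cases "is_path Q p")
    case True
    have "pmul Q a b p = (\<Sum>n\<in>{0..length (snd p)}. a (tk p n) * (\<Sum>k<m. (-1)^(Suc k) * rpow Q a k (dr Q p n)))"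
      using True by (simp add: pmul_eq b_def)
    also have "\<dots> = (\<Sum>n\<in>{0..length (snd p)}. \<Sum>k<m. (-1)^(Suc k) * (a (tk p n) * rpow Q a k (dr Q p n)))"
      by (simp add: sum_distrib_left algebra_simps)
    also have "\<dots> = (\<Sum>k<m. \<Sum>n\<in>{0..length (snd p)}. (-1)^(Suc k) * (a (tk p n) * rpow Q a k (dr Q p n)))"
      by (rule sum.swap)
    also have "\<dots> = (\<Sum>k<m. (-1)^(Suc k) * rpow Q a (Suc k) p)"
      using True by (simp add: pmul_eq sum_distrib_left)
    finally show ?thesis .
  next
    case False
    then show ?thesis by (simp add: pmul_eq)
  qed
  have "a + b + pmul Q a b = 0"
  proof (rule ext)
    fix p
    have "(a + b + pmul Q a b) p = rpow Q a 0 p + (\<Sum>k<m. (-1)^(Suc k) * rpow Q a k p)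
        + (\<Sum>k<m. (-1)^(Suc k) * rpow Q a (Suc k) p)" using ab by (simp add: b_def)
    also have "\<dots> = (-1)^m * rpow Q a m p" by (rule telescope)
    also have "\<dots> = 0" using rpow_zero[OF a] unfolding m_def by simp
    finally show "(a + b + pmul Q a b) p = 0 p" by simp
  qed
  then show "\<exists>b\<in>palg Q. a + b + pmul Q a b = 0" using bp by blast
qed

end

context fixes Q :: "('v,'e) quiver" assumes wf: "wf_quiver Q"
begin

lemma not_qreg_ideal:
  fixes x :: "('v,'e) qpath \<Rightarrow> 'k::field"
  assumes I: "r_ideal (palg Q) (pmul Q) I" and xI: "x \<in> I" and xk: "x \<notin> kR Q"
  shows "\<not> r_qreg (palg Q) (pmul Q) I"
proof
  assume qr: "r_qreg (palg Q) (pmul Q) I"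
  obtain i u cs y where yI: "y \<in> I" and cT: "(u, cs) \<in> Tset Q i" and pc: "pend Q (u, cs) = u"
    and van: "vanish Q (Tset Q i) y (length cs)" and yc: "y (u, cs) \<noteq> 0"
    and ye: "\<forall>p. y p \<noteq> 0 \<longrightarrow> pend Q p = u"
    using cycle_elem[OF wf I xI xk] by blast
  define K where "K = length cs"
  define S where "S = Tset Q i"
  have splS: "splitcl Q S" unfolding S_def by (rule splitcl_T[OF wf])
  have cp: "is_path Q (u, cs)" using T_path[OF wf cT] .
  have uv: "u \<in> verts Q" using path_verts[OF wf cp] by simp
  define t :: 'k where "t = (if K = 0 then - inverse (y (u, cs)) else 1)"
  define e where "e = (u, [] :: 'e list)"
  define a where "a = pmul Q (dl e t) y"
  have ep: "is_path Q e" unfolding e_def using uv by simp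
  have aI: "a \<in> I" unfolding a_def using I yI palg_dl[OF ep] unfolding r_ideal_def by blast
  have asupp: "a p \<noteq> 0 \<Longrightarrow> fst p = u \<and> pend Q p = u" for p
  proof -
    assume "a p \<noteq> 0"
    then have "pmul Q (dl e t) y p \<noteq> 0" unfolding a_def .
    from pmul_nz[OF this] obtain n where ip: "is_path Q p" and n: "dl e t (tk p n) \<noteq> 0" "y (dr Q p n) \<noteq> 0"
      by blast
    have "tk p n = e" using n(1) unfolding dl_def by (auto split: if_splits)
    then have "fst p = u" unfolding e_def by (metis fst_conv)
    moreover have "pend Q p = u" using ye n(2) path_split(3)[OF wf ip] by metis
    ultimately show ?thesis by blast
  qed
  have vd0: "vanish Q (Tset Q i) (dl e t) 0" using vanish_dl[OF wf, of "Tset Q i" e t] unfolding e_def by simp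
  have va: "vanish Q S a K" unfolding a_def S_def K_def
    using vanish_mul[OF wf splitcl_T[OF wf] vd0 van] by simp
  have ac: "a (u, cs) = t * y (u, cs)"
  proof -
    have "a (u, cs) = dl e t (tk (u, cs) 0) * y (dr Q (u, cs) 0)" unfolding a_def
      by (rule top_mul[OF wf splitcl_T[OF wf] vd0 van cT cp]) simp
    also have "\<dots> = t * y (u, cs)" unfolding e_def dl_def by simp
    finally show ?thesis .
  qed
  obtain b where bp: "b \<in> palg Q" and E0: "a + b + pmul Q a b = 0" using qr aI unfolding r_qreg_def by blast
  have E: "a p + b p + pmul Q a b p = 0" for p using fun_cong[OF E0, of p] by simp
  have Ee: "a e + b e + a e * b e = 0" using E[of e] pmul_Nil[OF uv, of a b] unfolding e_def by simp
  show False
  proof (cases "K = 0")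
    case True
    then have "cs = []" unfolding K_def by simp
    then have "a e = -1" using ac yc True unfolding t_def e_def by (simp add: field_simps)
    then show False using Ee by simp
  next
    case False
    then have t1: "t = 1" unfolding t_def by simp
    have acnz: "a (u, cs) \<noteq> 0" using ac yc t1 by simp
    have term0: "a (tk p n) * b (dr Q p n) = 0"
      if p: "p \<in> S" "is_path Q p" "n \<le> length (snd p)" and nb: "\<And>q. q \<in> S \<Longrightarrow> fst q = u \<Longrightarrow> b q \<noteq> 0 \<Longrightarrow> length (snd q) = length (snd p) - n \<Longrightarrow> False"
        for p n
    proof (rule ccontr)
      assume "a (tk p n) * b (dr Q p n) \<noteq> 0"
      then have an: "a (tk p n) \<noteq> 0" and bn: "b (dr Q p n) \<noteq> 0" by auto
      have "pend Q (tk p n) = u" using asupp[OF an] by blast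
      moreover have "dr Q p n \<in> S" using splS p unfolding splitcl_def by blast
      ultimately show False using nb[of "dr Q p n"] bn by simp
    qed
    define X where "X = {p \<in> S. fst p = u \<and> b p \<noteq> 0}"
    have finX: "finite X" unfolding X_def using palg_fin[OF bp] by (rule finite_subset[rotated]) blast
    show False
    proof (cases "X = {}")
      case True
      have "b (u, cs) = 0" using True cT unfolding X_def S_def by auto
      moreover have "pmul Q a b (u, cs) = 0"
      proof (rule ccontr)
        assume "pmul Q a b (u, cs) \<noteq> 0"
        from pmul_nz[OF this] obtain n where n: "n \<le> length cs" "a (tk (u, cs) n) \<noteq> 0" "b (dr Q (u, cs) n) \<noteq> 0"
          by auto
        have "pend Q (tk (u, cs) n) = u" using asupp[OF n(2)] by blast
        moreover have "dr Q (u, cs) n \<in> S" using splS cT cp n(1) unfolding splitcl_def S_def by auto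
        ultimately have "dr Q (u, cs) n \<in> X" unfolding X_def using n(3) by simp
        then show False using True by blast
      qed
      ultimately show False using E[of "(u, cs)"] acnz by simp
    next
      case False
      define N where "N = Max ((\<lambda>q. length (snd q)) ` X)"
      have "N \<in> (\<lambda>q. length (snd q)) ` X" unfolding N_def using finX False by (intro Max_in) auto
      then obtain M where MX: "M \<in> X" and MN: "length (snd M) = N" by blast
      have Nmax: "\<And>q. q \<in> X \<Longrightarrow> length (snd q) \<le> N" unfolding N_def using finX by auto
      have MS: "M \<in> S" and Mu: "fst M = u" and bM: "b M \<noteq> 0" using MX unfolding X_def by blast+
      have Mp: "is_path Q M" using T_path[OF wf MS[unfolded S_def]] .
      define w where "w = (u, cs @ snd M)"
      have wp: "is_path Q w" unfolding w_def using is_path_append[OF wf, of u cs "snd M"] cp pc Mp Mu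
        by (metis prod.collapse)
      have pw: "pend Q w = pend Q M" unfolding w_def using pend_append[of Q u cs "snd M"] pc Mu
        by (metis prod.collapse)
      have wS: "w \<in> S" unfolding S_def
        using TI[OF wf wp] T_fst[OF wf cT] T_pend[OF wf MS[unfolded S_def]] pw unfolding w_def by simp
      have lw: "length (snd w) = K + N" unfolding w_def K_def using MN by simp
      have bw: "b w = 0"
      proof (rule ccontr)
        assume "b w \<noteq> 0"
        then have "w \<in> X" unfolding X_def using wS unfolding w_def by simp
        then show False using Nmax lw \<open>K \<noteq> 0\<close> by fastforce
      qed
      have abw: "pmul Q a b w = a (u, cs) * b M"
      proof -
        have "pmul Q a b w = a (tk w K) * b (dr Q w K)"
        proof (rule pmul_single[OF wp])
          show "K \<le> length (snd w)" using lw by simp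
          fix n assume n: "n \<le> length (snd w)" "n \<noteq> K"
          show "a (tk w n) * b (dr Q w n) = 0"
          proof (cases "n < K")
            case True
            show ?thesis
            proof (rule term0[OF wS wp n(1)])
              fix q assume q: "q \<in> S" "fst q = u" "b q \<noteq> 0" "length (snd q) = length (snd w) - n"
              then have "q \<in> X" unfolding X_def by blast
              then have "length (snd q) \<le> N" by (rule Nmax)
              then show False using q(4) lw True by linarith
            qed
          next
            case False
            then have "K < length (snd (tk w n))" using n by simp
            moreover have "tk w n \<in> S" "is_path Q (tk w n)" using splS wS wp n(1) path_split[OF wf wp]
              unfolding splitcl_def by blast+
            ultimately have "a (tk w n) = 0" using va unfolding vanish_def by blast
            then show ?thesis by simp
          qed
        qed
        moreover have "tk w K = (u, cs)" unfolding w_def K_def by simp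
        moreover have "dr Q w K = M" unfolding w_def K_def using pc Mu by (simp add: prod_eq_iff)
        ultimately show ?thesis by simp
      qed
      show False
      proof (cases "N = 0")
        case False
        have "a w = 0" using va wS wp lw False unfolding vanish_def by auto
        then have "a (u, cs) * b M = 0" using E[of w] bw abw by simp
        then show False using acnz bM by simp
      next
        case True
        then have "M = e" unfolding e_def using MN Mu by (simp add: prod_eq_iff)
        moreover have "w = (u, cs)" unfolding w_def using MN True by simp
        ultimately have "a (u, cs) + a (u, cs) * b e = 0" using E[of w] bw abw by simp
        then have "a (u, cs) * (1 + b e) = 0" by (simp add: algebra_simps)
        then have "b e = -1" using acnz by (simp add: add_eq_0_iff)
        then show False using Ee by simp
      qed
    qed
  qed
qed

end

context fixes Q :: "('v,'e) quiver" assumes wf: "wf_quiver Q"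
begin

lemma ring_rad_eq: "ring_rad r (palg Q) (pmul Q) = (kR Q :: (('v,'e) qpath \<Rightarrow> 'k::field) set)"
proof (cases r)
  case Baer
  then show ?thesis using baer_eq[OF wf] by simp
next
  case Levitzki
  have "\<Union>{I. r_ideal (palg Q) (pmul Q) I \<and> r_locnil (pmul Q) I} = (kR Q :: (('v,'e) qpath \<Rightarrow> 'k::field) set)"
  proof (rule subset_antisym)
    show "\<Union>{I. r_ideal (palg Q) (pmul Q) I \<and> r_locnil (pmul Q) I} \<subseteq> (kR Q :: (('v,'e) qpath \<Rightarrow> 'k::field) set)"
    proof (rule Union_least, clarify)
      fix I :: "(('v,'e) qpath \<Rightarrow> 'k) set" and x
      assume I: "r_ideal (palg Q) (pmul Q) I" "r_locnil (pmul Q) I" and x: "x \<in> I"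
      show "x \<in> kR Q"
      proof (rule ccontr)
        assume "x \<notin> kR Q"
        then obtain y where y: "y \<in> I" "\<forall>n. foldl (pmul Q) y (replicate n y) \<noteq> 0"
          using not_nil_ideal[OF wf I(1) x] by blast
        have "finite {y} \<and> {y} \<subseteq> I" using y by simp
        from I(2)[unfolded r_locnil_def, rule_format, OF this]
        obtain n where "\<forall>z zs. z \<in> {y} \<and> set zs \<subseteq> {y} \<and> length zs = n \<longrightarrow> foldl (pmul Q) z zs = 0"
          by blast
        moreover have "set (replicate n y) \<subseteq> {y}" by auto
        ultimately have "foldl (pmul Q) y (replicate n y) = 0" by simp
        then show False using y by blast
      qed
    qed
    show "(kR Q :: (('v,'e) qpath \<Rightarrow> 'k::field) set) \<subseteq> \<Union>{I. r_ideal (palg Q) (pmul Q) I \<and> r_locnil (pmul Q) I}"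
      using kR_ideal[OF wf] kR_locnil[OF wf] by blast
  qed
  then show ?thesis using Levitzki ideal_gen_eq[OF kR_ideal[OF wf]] by (simp add: lev_rad_def)
next
  case Koethe
  have "\<Union>{I. r_ideal (palg Q) (pmul Q) I \<and> r_nil (pmul Q) I} = (kR Q :: (('v,'e) qpath \<Rightarrow> 'k::field) set)"
  proof (rule subset_antisym)
    show "\<Union>{I. r_ideal (palg Q) (pmul Q) I \<and> r_nil (pmul Q) I} \<subseteq> (kR Q :: (('v,'e) qpath \<Rightarrow> 'k::field) set)"
    proof (rule Union_least, clarify)
      fix I :: "(('v,'e) qpath \<Rightarrow> 'k) set" and x
      assume I: "r_ideal (palg Q) (pmul Q) I" "r_nil (pmul Q) I" and x: "x \<in> I"
      show "x \<in> kR Q"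
      proof (rule ccontr)
        assume "x \<notin> kR Q"
        then obtain y where y: "y \<in> I" "\<forall>n. foldl (pmul Q) y (replicate n y) \<noteq> 0"
          using not_nil_ideal[OF wf I(1) x] by blast
        then show False using I(2) unfolding r_nil_def by blast
      qed
    qed
    show "(kR Q :: (('v,'e) qpath \<Rightarrow> 'k::field) set) \<subseteq> \<Union>{I. r_ideal (palg Q) (pmul Q) I \<and> r_nil (pmul Q) I}"
      using kR_ideal[OF wf] kR_nil[OF wf] by blast
  qed
  then show ?thesis using Koethe ideal_gen_eq[OF kR_ideal[OF wf]] by (simp add: nil_rad_def)
next
  case Jacobson
  have "\<Union>{I. r_ideal (palg Q) (pmul Q) I \<and> r_qreg (palg Q) (pmul Q) I} = (kR Q :: (('v,'e) qpath \<Rightarrow> 'k::field) set)"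
  proof (rule subset_antisym)
    show "\<Union>{I. r_ideal (palg Q) (pmul Q) I \<and> r_qreg (palg Q) (pmul Q) I} \<subseteq> (kR Q :: (('v,'e) qpath \<Rightarrow> 'k::field) set)"
    proof (rule Union_least, clarify)
      fix I :: "(('v,'e) qpath \<Rightarrow> 'k) set" and x
      assume I: "r_ideal (palg Q) (pmul Q) I" "r_qreg (palg Q) (pmul Q) I" and x: "x \<in> I"
      show "x \<in> kR Q" using not_qreg_ideal[OF wf I(1) x] I(2) by blast
    qed
    show "(kR Q :: (('v,'e) qpath \<Rightarrow> 'k::field) set) \<subseteq> \<Union>{I. r_ideal (palg Q) (pmul Q) I \<and> r_qreg (palg Q) (pmul Q) I}"
      using kR_ideal[OF wf] kR_qreg[OF wf] by blast
  qed
  then show ?thesis using Jacobson ideal_gen_eq[OF kR_ideal[OF wf]] by (simp add: jac_rad_def)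
qed

lemma kR_graded: "\<forall>x\<in>(kR Q :: (('v,'e) qpath \<Rightarrow> 'k::field) set). \<forall>i\<in>verts Q. \<forall>j\<in>verts Q. pcomp Q i j x \<in> kR Q"
proof (intro ballI)
  fix x :: "('v,'e) qpath \<Rightarrow> 'k" and i j assume x: "x \<in> kR Q"
  have s: "\<And>p. pcomp Q i j x p \<noteq> 0 \<Longrightarrow> x p \<noteq> 0" unfolding pcomp_def by (auto split: if_splits)
  have "{p. pcomp Q i j x p \<noteq> 0} \<subseteq> {p. x p \<noteq> 0}" using s by blast
  moreover have "finite {p. x p \<noteq> 0}" using x unfolding kR_def palg_def by blast
  ultimately have "finite {p. pcomp Q i j x p \<noteq> 0}" by (rule finite_subset)
  moreover have "\<forall>p. pcomp Q i j x p \<noteq> 0 \<longrightarrow> regular_path Q p" using x s unfolding kR_def by blast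
  ultimately show "pcomp Q i j x \<in> kR Q" unfolding kR_def palg_def regular_path_def by blast
qed

lemma gm_eq: "gm_rad r Q = (kR Q :: (('v,'e) qpath \<Rightarrow> 'k::field) set)"
proof -
  have "\<Union>{I. r_ideal (palg Q) (pmul Q) I \<and>
          (\<forall>x\<in>I. \<forall>i\<in>verts Q. \<forall>j\<in>verts Q. pcomp Q i j x \<in> I) \<and>
          I \<subseteq> ring_rad r (palg Q) (pmul Q)} = (kR Q :: (('v,'e) qpath \<Rightarrow> 'k::field) set)"
    using ring_rad_eq kR_ideal[OF wf] kR_graded by blast
  then show ?thesis unfolding gm_rad_def using ideal_gen_eq[OF kR_ideal[OF wf]] by simp
qed

end

primrec gws :: "'e list \<Rightarrow> 'e list \<Rightarrow> nat \<Rightarrow> 'e list" where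
  "gws ls hs 0 = ls"
| "gws ls hs (Suc k) = gws ls hs k @ hs @ ls"

lemma length_gws: "length (gws ls hs k) = k * (length ls + length hs) + length ls"
  by (induction k) auto

lemma gfold_rep: "gfold tri x (replicate (Suc n) (g, y)) = tri (gfold tri x (replicate n (g, y))) g y"
  unfolding gfold_def using foldl_rep[of "\<lambda>acc gy. tri acc (fst gy) (snd gy)" x n "(g, y)"] by simp

lemma palg_ij_sub: "f \<in> palg_ij Q i j \<Longrightarrow> f \<in> palg Q" unfolding palg_ij_def by blast
lemma palg_ij_supp: "f \<in> palg_ij Q i j \<Longrightarrow> f p \<noteq> 0 \<Longrightarrow> fst p = i \<and> pend Q p = j"
  unfolding palg_ij_def by blast
lemma palg_ij_zero: "(0 :: ('v,'e) qpath \<Rightarrow> 'k::field) \<in> palg_ij Q i j"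
  unfolding palg_ij_def using palg_zero by simp
lemma palg_ij_subgroup: "add_subgroup (palg_ij Q i j :: (('v,'e) qpath \<Rightarrow> 'k::field) set)"
  unfolding add_subgroup_def
proof (intro conjI ballI)
  show "0 \<in> (palg_ij Q i j :: (('v,'e) qpath \<Rightarrow> 'k::field) set)" by (rule palg_ij_zero)
  fix x y :: "('v,'e) qpath \<Rightarrow> 'k" assume xy: "x \<in> palg_ij Q i j" "y \<in> palg_ij Q i j"
  have "x - y \<in> palg Q" using palg_diff[OF palg_ij_sub[OF xy(1)] palg_ij_sub[OF xy(2)]] .
  moreover have "\<forall>p. (x - y) p \<noteq> 0 \<longrightarrow> fst p = i \<and> pend Q p = j"
  proof (intro allI impI)
    fix p assume "(x - y) p \<noteq> 0"
    then have "x p \<noteq> 0 \<or> y p \<noteq> 0" by auto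
    then show "fst p = i \<and> pend Q p = j" using palg_ij_supp[OF xy(1)] palg_ij_supp[OF xy(2)] by blast
  qed
  ultimately show "x - y \<in> palg_ij Q i j" unfolding palg_ij_def by blast
qed

lemma palg_ij_dl:
  assumes ip: "is_path Q p" and "fst p = i" "pend Q p = j"
  shows "dl p c \<in> palg_ij Q i j"
proof -
  have a: "dl p c \<in> palg Q" using palg_dl[OF ip] .
  have "\<forall>q. dl p c q \<noteq> 0 \<longrightarrow> fst q = i \<and> pend Q q = j"
  proof (intro allI impI)
    fix q assume "dl p c q \<noteq> 0"
    then have "q = p" unfolding dl_def by (simp split: if_splits)
    then show "fst q = i \<and> pend Q q = j" using assms(2,3) by simp
  qed
  then show ?thesis unfolding palg_ij_def using a by blast
qed

lemma ptri_zero_mid[simp]: "ptri Q a 0 b = 0" by (simp add: ptri_def)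
lemma ptri_zero_left[simp]: "ptri Q 0 g b = 0" by (simp add: ptri_def)
lemma ptri_zero_right[simp]: "ptri Q a g 0 = 0" by (simp add: ptri_def)

lemma g_ideal_zero: "g_ideal (palg_ij Q i j) G (ptri Q) {0 :: ('v,'e) qpath \<Rightarrow> 'k::field}"
  unfolding g_ideal_def add_subgroup_def using palg_ij_zero by simp

lemma g_gen_zero:
  assumes "S \<subseteq> {0}"
  shows "g_ideal_gen (palg_ij Q i j) G (ptri Q) S = {0 :: ('v,'e) qpath \<Rightarrow> 'k::field}"
proof
  show "g_ideal_gen (palg_ij Q i j) G (ptri Q) S \<subseteq> {0}"
    by (rule g_ideal_gen_sub[OF g_ideal_zero assms])
  show "{0} \<subseteq> g_ideal_gen (palg_ij Q i j) G (ptri Q) S"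
    unfolding g_ideal_gen_def g_ideal_def add_subgroup_def by blast
qed

context fixes Q :: "('v,'e) quiver" assumes wf: "wf_quiver Q"
begin

lemma three_prod:
  assumes S: "splitcl Q S" and vb: "vanish Q S b (length (snd L))" and vc: "vanish Q S c (length (snd M))"
    and Lp: "is_path Q L" and Mp: "is_path Q M" and h: "is_path Q (pend Q L, hs)" "pend Q (pend Q L, hs) = fst M"
    and wS: "(fst L, snd L @ hs @ snd M) \<in> S"
  shows "is_path Q (fst L, snd L @ hs @ snd M)"
    "pmul Q (pmul Q b (dl (pend Q L, hs) t)) c (fst L, snd L @ hs @ snd M) = b L * t * c M"
    "vanish Q S (pmul Q (pmul Q b (dl (pend Q L, hs) t)) c) (length (snd L) + length hs + length (snd M))"
    "pend Q (fst L, snd L @ hs @ snd M) = pend Q M"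
proof -
  define hh where "hh = (pend Q L, hs)"
  define w1 where "w1 = (fst L, snd L @ hs)"
  define w where "w = (fst L, snd L @ hs @ snd M)"
  have w1p: "is_path Q w1" unfolding w1_def using is_path_append[OF wf, of "fst L" "snd L" hs] Lp h(1) by simp
  have pw1: "pend Q w1 = fst M" unfolding w1_def using pend_append[of Q "fst L" "snd L" hs] h(2) by simp
  have wp: "is_path Q w" unfolding w_def using is_path_append[OF wf, of "fst L" "snd L @ hs" "snd M"]
      w1p pw1 Mp unfolding w1_def by simp
  then show "is_path Q (fst L, snd L @ hs @ snd M)" unfolding w_def .
  show "pend Q (fst L, snd L @ hs @ snd M) = pend Q M" using pend_append[of Q "fst L" "snd L @ hs" "snd M"]
      pw1 unfolding w1_def by simp
  have w1S: "w1 \<in> S"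
  proof -
    have A: "\<And>n. n \<le> length (snd w) \<Longrightarrow> tk w n \<in> S" using S wS wp unfolding splitcl_def w_def by blast
    have "tk w (length (snd L) + length hs) \<in> S" by (rule A) (simp add: w_def)
    moreover have "tk w (length (snd L) + length hs) = w1" unfolding w_def w1_def by simp
    ultimately show ?thesis by simp
  qed
  have vdl: "vanish Q S (dl hh t) (length hs)" using vanish_dl[OF wf, of S hh t] unfolding hh_def by simp
  have vb': "vanish Q S (pmul Q b (dl hh t)) (length (snd L) + length hs)"
    using vanish_mul[OF wf S vb vdl] .
  then show "vanish Q S (pmul Q (pmul Q b (dl (pend Q L, hs) t)) c) (length (snd L) + length hs + length (snd M))"
    using vanish_mul[OF wf S vb' vc] unfolding hh_def by simp
  have b'w1: "pmul Q b (dl hh t) w1 = b L * t"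
  proof -
    have "pmul Q b (dl hh t) w1 = b (tk w1 (length (snd L))) * dl hh t (dr Q w1 (length (snd L)))"
      by (rule top_mul[OF wf S vb vdl w1S w1p]) (simp add: w1_def)
    also have "\<dots> = b L * t" unfolding w1_def hh_def dl_def by simp
    finally show ?thesis .
  qed
  have "pmul Q (pmul Q b (dl hh t)) c w = pmul Q b (dl hh t) (tk w (length (snd L) + length hs)) * c (dr Q w (length (snd L) + length hs))"
    by (rule top_mul[OF wf S vb' vc wS[folded w_def] wp]) (simp add: w_def)
  also have "\<dots> = pmul Q b (dl hh t) w1 * c M"
  proof -
    have "tk w (length (snd L) + length hs) = w1" unfolding w_def w1_def by simp
    moreover have "dr Q w (length (snd L) + length hs) = M" unfolding w_def
      using pw1 unfolding w1_def by simp
    ultimately show ?thesis by simp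
  qed
  finally show "pmul Q (pmul Q b (dl (pend Q L, hs) t)) c (fst L, snd L @ hs @ snd M) = b L * t * c M"
    using b'w1 unfolding w_def hh_def by simp
qed

lemma top_Pall:
  assumes "f \<in> palg Q" "f p \<noteq> 0"
  shows "\<exists>L. f L \<noteq> 0 \<and> is_path Q L \<and> vanish Q (Pall Q) f (length (snd L))"
proof -
  have "p \<in> Pall Q" using palg_path[OF assms] unfolding Pall_def by simp
  from exists_top[OF wf assms(1) this assms(2)] show ?thesis unfolding Pall_def by blast
qed

end

lemma gamma_zeroG:
  fixes M :: "'a::ab_group_add set"
  assumes Ms: "add_subgroup M" and tz: "\<And>a b. tri a 0 b = 0"
  shows "gamma_rad r M {0} tri = M"
proof -
  have Mi: "g_ideal M {0} tri M" unfolding g_ideal_def using Ms tz add_subgroup_zero[OF Ms] by simp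
  have Mall: "g_ideal M {0} tri I \<Longrightarrow> I \<subseteq> M" for I unfolding g_ideal_def by blast
  show ?thesis
  proof (cases r)
    case Baer
    have "{P. g_prime M {0} tri P} = {M}"
    proof
      show "{P. g_prime M {0} tri P} \<subseteq> {M}"
      proof
        fix P assume "P \<in> {P. g_prime M {0} tri P}"
        then have P: "g_prime M {0} tri P" by simp
        have Pi: "g_ideal M {0} tri P" using P unfolding g_prime_def by blast
        have "\<forall>u\<in>M. \<forall>g\<in>{0}. \<forall>v\<in>M. tri u g v \<in> P"
          using tz add_subgroup_zero[of P] Pi unfolding g_ideal_def by simp
        then have "M \<subseteq> P" using P Mi unfolding g_prime_def by blast
        then show "P \<in> {M}" using Mall[OF Pi] by blast
      qed
      show "{M} \<subseteq> {P. g_prime M {0} tri P}"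
        using Mi Mall unfolding g_prime_def by blast
    qed
    then show ?thesis using Baer by (simp add: g_baer_rad_def)
  next
    case Levitzki
    have "g_locnil {0} tri M" unfolding g_locnil_def
    proof (intro allI impI)
      fix F \<Phi> assume H: "finite F \<and> F \<subseteq> M \<and> finite \<Phi> \<and> \<Phi> \<subseteq> {0::'a}"
      show "\<exists>n. \<forall>x ps. x \<in> F \<and> length ps = n \<and> set ps \<subseteq> \<Phi> \<times> F \<longrightarrow> gfold tri x ps = 0"
      proof (intro exI[of _ 1] allI impI)
        fix x ps assume xp: "x \<in> F \<and> length ps = 1 \<and> set ps \<subseteq> \<Phi> \<times> F"
        then obtain g y where ps: "ps = [(g, y)]" by (metis One_nat_def length_0_conv length_Suc_conv surj_pair)
        have "g = 0" using xp H ps by auto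
        then show "gfold tri x ps = 0" using ps tz by (simp add: gfold_def)
      qed
    qed
    then have "\<Union>{I. g_ideal M {0} tri I \<and> g_locnil {0} tri I} = M" using Mi Mall by blast
    then show ?thesis using Levitzki g_ideal_gen_eq[OF Mi] by (simp add: g_lev_rad_def)
  next
    case Koethe
    have "g_nil {0} tri M" unfolding g_nil_def
    proof (intro ballI exI[of _ 1] allI impI)
      fix x gs assume xg: "length gs = 1 \<and> set gs \<subseteq> {0::'a}"
      then obtain g where gs: "gs = [g]" by (metis One_nat_def length_0_conv length_Suc_conv)
      have "g = 0" using xg gs by auto
      then show "gfold tri x (map (\<lambda>g. (g, x)) gs) = 0" using gs tz by (simp add: gfold_def)
    qed
    then have "\<Union>{I. g_ideal M {0} tri I \<and> g_nil {0} tri I} = M" using Mi Mall by blast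
    then show ?thesis using Koethe g_ideal_gen_eq[OF Mi] by (simp add: g_nil_rad_def)
  next
    case Jacobson
    have "g_qreg M {0} tri M" unfolding g_qreg_def
    proof (intro ballI)
      fix a g assume a: "a \<in> M" and g: "g \<in> {0::'a}"
      have "-a \<in> M" using add_subgroup_diff[OF Ms add_subgroup_zero[OF Ms] a] by simp
      moreover have "a + (-a) + tri a g (-a) = 0" using g tz by simp
      ultimately show "\<exists>b\<in>M. a + b + tri a g b = 0" by blast
    qed
    then have "\<Union>{I. g_ideal M {0} tri I \<and> g_qreg M {0} tri I} = M" using Mi Mall by blast
    then show ?thesis using Jacobson g_ideal_gen_eq[OF Mi] by (simp add: g_jac_rad_def)
  qed
qed

context fixes Q :: "('v,'e) quiver" assumes wf: "wf_quiver Q"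
begin

lemma path3:
  assumes Lp: "is_path Q L" and Mp: "is_path Q M" and h: "is_path Q (pend Q L, hs)" "pend Q (pend Q L, hs) = fst M"
  shows "is_path Q (fst L, snd L @ hs @ snd M)"
proof -
  have w1p: "is_path Q (fst L, snd L @ hs)" using is_path_append[OF wf, of "fst L" "snd L" hs] Lp h(1) by simp
  have pw1: "pend Q (fst L, snd L @ hs) = fst M" using pend_append[of Q "fst L" "snd L" hs] h(2) by simp
  show ?thesis using is_path_append[OF wf, of "fst L" "snd L @ hs" "snd M"] w1p pw1 Mp by simp
qed

lemma Gzero:
  assumes "\<not> has_path Q j i"
  shows "palg_ij Q j i = {0 :: ('v,'e) qpath \<Rightarrow> 'k::field}"
proof
  show "palg_ij Q j i \<subseteq> {0 :: ('v,'e) qpath \<Rightarrow> 'k::field}"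
  proof
    fix f :: "('v,'e) qpath \<Rightarrow> 'k" assume f: "f \<in> palg_ij Q j i"
    have "f = 0"
    proof (rule ext, rule ccontr)
      fix p assume "f p \<noteq> 0 p"
      then have fp: "f p \<noteq> 0" by simp
      have "is_path Q p" using palg_path[OF palg_ij_sub[OF f] fp] .
      moreover have "fst p = j \<and> pend Q p = i" using palg_ij_supp[OF f fp] .
      ultimately have "has_path Q j i" unfolding has_path_def by blast
      then show False using assms by simp
    qed
    then show "f \<in> {0}" by simp
  qed
  show "{0} \<subseteq> (palg_ij Q j i :: (('v,'e) qpath \<Rightarrow> 'k::field) set)" by (simp add: palg_ij_zero)
qed

lemma caseb:
  assumes nh: "\<not> has_path Q j i"
  shows "gamma_rad r (palg_ij Q i j) (palg_ij Q j i) (ptri Q) = (palg_ij Q i j :: (('v,'e) qpath \<Rightarrow> 'k::field) set)"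
proof -
  have e: "palg_ij Q j i = ({0} :: (('v,'e) qpath \<Rightarrow> 'k::field) set)" by (rule Gzero[OF nh])
  show ?thesis unfolding e by (rule gamma_zeroG[OF palg_ij_subgroup[of Q i j]]) simp
qed

lemma caseb_kR:
  assumes nh: "\<not> has_path Q j i" and iv: "i \<in> verts Q"
  shows "(palg_ij Q i j :: (('v,'e) qpath \<Rightarrow> 'k::field) set) \<subseteq> kR Q"
proof
  fix f :: "('v,'e) qpath \<Rightarrow> 'k" assume f: "f \<in> palg_ij Q i j"
  have "\<forall>p. f p \<noteq> 0 \<longrightarrow> regular_path Q p"
  proof (intro allI impI)
    fix p assume fp: "f p \<noteq> 0"
    have ip: "is_path Q p" using palg_path[OF palg_ij_sub[OF f] fp] .
    have ep: "fst p = i" "pend Q p = j" using palg_ij_supp[OF f fp] by blast+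
    have "snd p \<noteq> []"
    proof
      assume "snd p = []"
      then have "pend Q p = fst p" by (simp add: pend_def)
      then have "j = i" using ep by simp
      then show False using nh has_path_refl[OF wf iv] by simp
    qed
    then show "regular_path Q p" unfolding regular_path_def using ip ep nh by simp
  qed
  then show "f \<in> kR Q" unfolding kR_def using palg_ij_sub[OF f] by blast
qed

lemma gpow_nz:
  fixes x :: "('v,'e) qpath \<Rightarrow> 'k::field"
  assumes x: "x \<in> palg_ij Q i j" "x p0 \<noteq> 0" and h: "is_path Q (j, hs)" "pend Q (j, hs) = i"
  shows "gfold (ptri Q) x (replicate n (dl (j, hs) 1, x)) \<noteq> 0"
proof -
  have xp: "x \<in> palg Q" using palg_ij_sub[OF x(1)] .
  obtain L where L: "x L \<noteq> 0" "is_path Q L" "vanish Q (Pall Q) x (length (snd L))"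
    using top_Pall[OF wf xp x(2)] by blast
  have Le: "fst L = i" "pend Q L = j" using palg_ij_supp[OF x(1) L(1)] by blast+
  have Lq: "L = (i, snd L)" using Le(1) by (metis prod.collapse)
  define z where "z k = gfold (ptri Q) x (replicate k (dl (j, hs) 1, x))" for k
  have inv: "is_path Q (i, gws (snd L) hs k) \<and> pend Q (i, gws (snd L) hs k) = j \<and>
     vanish Q (Pall Q) (z k) (length (gws (snd L) hs k)) \<and> z k (i, gws (snd L) hs k) = x L ^ Suc k" for k
  proof (induction k)
    case 0
    have z0: "z 0 = x" unfolding z_def gfold_def by simp
    show ?case using L Le Lq unfolding z0 by simp
  next
    case (Suc k)
    let ?L' = "(i, gws (snd L) hs k)"
    have IH: "is_path Q ?L'" "pend Q ?L' = j" "vanish Q (Pall Q) (z k) (length (snd ?L'))"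
      "z k ?L' = x L ^ Suc k" using Suc.IH by auto
    have hh: "is_path Q (pend Q ?L', hs)" "pend Q (pend Q ?L', hs) = fst L" using h IH(2) Le by auto
    have wp: "is_path Q (fst ?L', snd ?L' @ hs @ snd L)" by (rule path3[OF IH(1) L(2) hh])
    then have wS: "(fst ?L', snd ?L' @ hs @ snd L) \<in> Pall Q" unfolding Pall_def by simp
    note tp2 = three_prod(2)[OF wf splitcl_Pall[OF wf] IH(3) L(3) IH(1) L(2) hh wS, of 1]
    note tp3 = three_prod(3)[OF wf splitcl_Pall[OF wf] IH(3) L(3) IH(1) L(2) hh wS, of 1]
    note tp4 = three_prod(4)[OF wf splitcl_Pall[OF wf] IH(3) L(3) IH(1) L(2) hh wS]
    have zS: "z (Suc k) = pmul Q (pmul Q (z k) (dl (j, hs) 1)) x"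
      unfolding z_def gfold_rep ptri_def by simp
    have e1: "(fst ?L', snd ?L' @ hs @ snd L) = (i, gws (snd L) hs (Suc k))" by simp
    have v2: "z (Suc k) (i, gws (snd L) hs (Suc k)) = z k ?L' * 1 * x L"
      using tp2 unfolding IH(2) zS[symmetric] e1 .
    have v3: "vanish Q (Pall Q) (z (Suc k)) (length (snd ?L') + length hs + length (snd L))"
      using tp3 unfolding IH(2) zS[symmetric] .
    show ?case
    proof (intro conjI)
      show "is_path Q (i, gws (snd L) hs (Suc k))" using wp e1 by simp
      show "pend Q (i, gws (snd L) hs (Suc k)) = j" using tp4 e1 Le by simp
      show "vanish Q (Pall Q) (z (Suc k)) (length (gws (snd L) hs (Suc k)))"
        using v3 by (simp add: add.assoc)
      show "z (Suc k) (i, gws (snd L) hs (Suc k)) = x L ^ Suc (Suc k)"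
        using v2 IH(4) by (simp add: algebra_simps)
    qed
  qed
  show ?thesis
  proof
    assume "gfold (ptri Q) x (replicate n (dl (j, hs) 1, x)) = 0"
    then have "z n (i, gws (snd L) hs n) = 0" unfolding z_def by simp
    then show False using inv[of n] L(1) by simp
  qed
qed

end

context fixes Q :: "('v,'e) quiver" assumes wf: "wf_quiver Q"
begin

lemma nz_fun: "(f :: 'a \<Rightarrow> 'k::zero) \<noteq> 0 \<Longrightarrow> \<exists>p. f p \<noteq> 0"
  by (metis zero_fun_def ext)

lemma casea_sub:
  fixes I :: "(('v,'e) qpath \<Rightarrow> 'k::field) set"
  assumes hji: "has_path Q j i" and iv: "i \<in> verts Q"
    and Ii: "g_ideal (palg_ij Q i j) (palg_ij Q j i) (ptri Q) I"
    and P: "g_nil (palg_ij Q j i) (ptri Q) I \<or> g_locnil (palg_ij Q j i) (ptri Q) I \<or>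
            g_qreg (palg_ij Q i j) (palg_ij Q j i) (ptri Q) I"
  shows "I \<subseteq> {0}"
proof
  fix x assume xI: "x \<in> I"
  show "x \<in> {0}"
  proof (rule ccontr)
    assume "x \<notin> {0}"
    then have "x \<noteq> 0" by simp
    then obtain p0 where p0: "x p0 \<noteq> 0" using nz_fun[of x] by blast
    have xM: "x \<in> palg_ij Q i j" using Ii xI unfolding g_ideal_def by blast
    obtain hs where h: "is_path Q (j, hs)" "pend Q (j, hs) = i" using hji unfolding has_path_def
      by (metis prod.collapse)
    have dG: "dl (j, hs) 1 \<in> palg_ij Q j i" by (rule palg_ij_dl[OF h(1)]) (simp_all add: h(2))
    show False
    proof (cases "g_qreg (palg_ij Q i j) (palg_ij Q j i) (ptri Q) I")
      case False
      then have "g_nil (palg_ij Q j i) (ptri Q) I \<or> g_locnil (palg_ij Q j i) (ptri Q) I" using P by blast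
      then obtain n where n: "gfold (ptri Q) x (replicate n (dl (j, hs) 1, x)) = 0"
      proof
        assume "g_nil (palg_ij Q j i) (ptri Q) I"
        then obtain n where "\<forall>gs. length gs = n \<and> set gs \<subseteq> palg_ij Q j i \<longrightarrow>
            gfold (ptri Q) x (map (\<lambda>g. (g, x)) gs) = 0" using xI unfolding g_nil_def by blast
        moreover have "length (replicate n (dl (j, hs) 1)) = n \<and> set (replicate n (dl (j, hs) 1)) \<subseteq> palg_ij Q j i"
          using dG by auto
        ultimately have "gfold (ptri Q) x (map (\<lambda>g. (g, x)) (replicate n (dl (j, hs) 1))) = 0" by blast
        then show ?thesis using that by simp
      next
        assume A: "g_locnil (palg_ij Q j i) (ptri Q) I"
        have "finite {x} \<and> {x} \<subseteq> I \<and> finite {dl (j, hs) 1} \<and> {dl (j, hs) 1} \<subseteq> palg_ij Q j i"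
          using xI dG by simp
        from A[unfolded g_locnil_def, rule_format, OF this]
        obtain n where "\<forall>y ps. y \<in> {x} \<and> length ps = n \<and> set ps \<subseteq> {dl (j, hs) 1} \<times> {x} \<longrightarrow>
            gfold (ptri Q) y ps = 0" by blast
        moreover have "x \<in> {x} \<and> length (replicate n (dl (j, hs) 1, x)) = n \<and>
            set (replicate n (dl (j, hs) 1, x)) \<subseteq> {dl (j, hs) 1} \<times> {x}" by auto
        ultimately have "gfold (ptri Q) x (replicate n (dl (j, hs) 1, x)) = 0" by blast
        then show ?thesis using that by simp
      qed
      then show False using gpow_nz[OF wf xM p0 h] by blast
    next
      case True
      note qr = True
      have xp: "x \<in> palg Q" using palg_ij_sub[OF xM] .
      obtain L where L: "x L \<noteq> 0" "is_path Q L" "vanish Q (Pall Q) x (length (snd L))"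
        using top_Pall[OF wf xp p0] by blast
      have Le: "fst L = i" "pend Q L = j" using palg_ij_supp[OF xM L(1)] by blast+
      define A where "A = length (snd L)"
      define H where "H = length hs"
      define t :: 'k where "t = (if A = 0 then - inverse (x L) else 1)"
      have t0: "t \<noteq> 0" unfolding t_def using L(1) by simp
      define g where "g = dl (j, hs) t"
      have gG: "g \<in> palg_ij Q j i" unfolding g_def by (rule palg_ij_dl[OF h(1)]) (simp_all add: h(2))
      obtain b where bM: "b \<in> palg_ij Q i j" and E0: "x + b + ptri Q x g b = 0"
        using qr xI gG unfolding g_qreg_def by blast
      have E: "x p + b p + pmul Q (pmul Q x g) b p = 0" for p
        using fun_cong[OF E0, of p] by (simp add: ptri_def)
      have bp: "b \<in> palg Q" using palg_ij_sub[OF bM] .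
      show False
      proof (cases "\<exists>p. b p \<noteq> 0")
        case False
        then have "b = 0" by (auto simp: fun_eq_iff)
        then show False using E[of L] L(1) by simp
      next
        case True
        then obtain q0 where q0: "b q0 \<noteq> 0" by blast
        obtain M where M: "b M \<noteq> 0" "is_path Q M" "vanish Q (Pall Q) b (length (snd M))"
          using top_Pall[OF wf bp q0] by blast
        have Me: "fst M = i" "pend Q M = j" using palg_ij_supp[OF bM M(1)] by blast+
        define N where "N = length (snd M)"
        have hh: "is_path Q (pend Q L, hs)" "pend Q (pend Q L, hs) = fst M" using h Le Me by simp_all
        have wp: "is_path Q (fst L, snd L @ hs @ snd M)" by (rule path3[OF wf L(2) M(2) hh])
        then have wS: "(fst L, snd L @ hs @ snd M) \<in> Pall Q" unfolding Pall_def by simp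
        have tp: "pmul Q (pmul Q x g) b (fst L, snd L @ hs @ snd M) = x L * t * b M"
          using three_prod(2)[OF wf splitcl_Pall[OF wf] L(3) M(3) L(2) M(2) hh wS, of t]
          unfolding g_def Le(2) .
        have lw: "length (snd L @ hs @ snd M) = A + H + N" unfolding A_def H_def N_def by simp
        show False
        proof (cases "H + N > 0 \<and> A + H > 0")
          case True
          have "x (fst L, snd L @ hs @ snd M) = 0" using L(3) wS wp lw True unfolding vanish_def A_def
            by (auto simp: Pall_def)
          moreover have "b (fst L, snd L @ hs @ snd M) = 0" using M(3) wS wp lw True unfolding vanish_def N_def
            by (auto simp: Pall_def)
          ultimately have "x L * t * b M = 0" using E[of "(fst L, snd L @ hs @ snd M)"] tp by simp
          then show False using L(1) t0 M(1) by simp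
        next
          case False
          then have H0: "H = 0" by auto
          then have hs0: "hs = []" unfolding H_def by simp
          then have ji: "j = i" using h(2) by simp
          define e where "e = (i, [] :: 'e list)"
          have ge: "g e = t" unfolding g_def e_def dl_def using hs0 ji by simp
          have Ee: "x e + b e + x e * t * b e = 0"
            using E[of e] pmul_Nil[OF iv, of "pmul Q x g" b] pmul_Nil[OF iv, of x g] ge unfolding e_def by simp
          show False
          proof (cases "A = 0")
            case True
            then have "L = e" unfolding e_def A_def using Le(1) by (simp add: prod_eq_iff)
            then have "x e * t = -1" using True L(1) unfolding t_def by simp
            then have "x e = 0" using Ee by (simp add: algebra_simps)
            then show False using L(1) \<open>L = e\<close> by simp
          next
            case False
            then have N0: "N = 0" using \<open>\<not> (H + N > 0 \<and> A + H > 0)\<close> H0 by simp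
            then have Me': "M = e" unfolding e_def N_def using Me(1) by (simp add: prod_eq_iff)
            have t1: "t = 1" unfolding t_def using False by simp
            have "(fst L, snd L @ hs @ snd M) = L" using hs0 Me' unfolding e_def by simp
            moreover have "b L = 0"
            proof -
              have "L \<in> Pall Q" using L(2) unfolding Pall_def by simp
              moreover have "length (snd M) < length (snd L)" using False N0 unfolding A_def N_def by simp
              ultimately show ?thesis using M(3) L(2) unfolding vanish_def by blast
            qed
            ultimately have "x L + x L * b e = 0" using E[of L] tp t1 Me' by simp
            then have "x L * (1 + b e) = 0" by (simp add: algebra_simps)
            then have "b e = -1" using L(1) by (simp add: add_eq_0_iff)
            then show False using Ee t1 by simp
          qed
        qed
      qed
    qed
  qed
qed

lemma zero_prime:
  assumes hji: "has_path Q j i"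
  shows "g_prime (palg_ij Q i j) (palg_ij Q j i) (ptri Q) {0 :: ('v,'e) qpath \<Rightarrow> 'k::field}"
  unfolding g_prime_def
proof (intro conjI allI impI)
  show "g_ideal (palg_ij Q i j) (palg_ij Q j i) (ptri Q) {0 :: ('v,'e) qpath \<Rightarrow> 'k::field}"
    by (rule g_ideal_zero)
  fix U V :: "(('v,'e) qpath \<Rightarrow> 'k) set"
  assume H: "g_ideal (palg_ij Q i j) (palg_ij Q j i) (ptri Q) U \<and> g_ideal (palg_ij Q i j) (palg_ij Q j i) (ptri Q) V \<and>
    (\<forall>u\<in>U. \<forall>g\<in>palg_ij Q j i. \<forall>v\<in>V. ptri Q u g v \<in> {0})"
  show "U \<subseteq> {0} \<or> V \<subseteq> {0}"
  proof (rule ccontr)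
    assume "\<not> (U \<subseteq> {0} \<or> V \<subseteq> {0})"
    then obtain u v where u: "u \<in> U" "u \<noteq> 0" and v: "v \<in> V" "v \<noteq> 0" by blast
    have uM: "u \<in> palg_ij Q i j" using H u(1) unfolding g_ideal_def by blast
    have vM: "v \<in> palg_ij Q i j" using H v(1) unfolding g_ideal_def by blast
    obtain p1 where p1: "u p1 \<noteq> 0" using nz_fun u(2) by blast
    obtain p2 where p2: "v p2 \<noteq> 0" using nz_fun v(2) by blast
    obtain L where L: "u L \<noteq> 0" "is_path Q L" "vanish Q (Pall Q) u (length (snd L))"
      using top_Pall[OF wf palg_ij_sub[OF uM] p1] by blast
    obtain M where M: "v M \<noteq> 0" "is_path Q M" "vanish Q (Pall Q) v (length (snd M))"
      using top_Pall[OF wf palg_ij_sub[OF vM] p2] by blast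
    have Le: "fst L = i" "pend Q L = j" using palg_ij_supp[OF uM L(1)] by blast+
    have Me: "fst M = i" using palg_ij_supp[OF vM M(1)] by blast
    obtain hs where h: "is_path Q (j, hs)" "pend Q (j, hs) = i" using hji unfolding has_path_def
      by (metis prod.collapse)
    have hh: "is_path Q (pend Q L, hs)" "pend Q (pend Q L, hs) = fst M" using h Le Me by simp_all
    have wp: "is_path Q (fst L, snd L @ hs @ snd M)" by (rule path3[OF wf L(2) M(2) hh])
    then have wS: "(fst L, snd L @ hs @ snd M) \<in> Pall Q" unfolding Pall_def by simp
    have tp: "pmul Q (pmul Q u (dl (j, hs) 1)) v (fst L, snd L @ hs @ snd M) = u L * 1 * v M"
      using three_prod(2)[OF wf splitcl_Pall[OF wf] L(3) M(3) L(2) M(2) hh wS, of 1]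
      unfolding Le(2) .
    have gG: "dl (j, hs) 1 \<in> palg_ij Q j i" by (rule palg_ij_dl[OF h(1)]) (simp_all add: h(2))
    have "ptri Q u (dl (j, hs) 1) v = 0" using H u(1) v(1) gG by blast
    then have "pmul Q (pmul Q u (dl (j, hs) 1)) v (fst L, snd L @ hs @ snd M) = 0"
      unfolding ptri_def by simp
    then show False using tp L(1) M(1) by simp
  qed
qed

lemma casea:
  assumes hji: "has_path Q j i" and iv: "i \<in> verts Q"
  shows "gamma_rad r (palg_ij Q i j) (palg_ij Q j i) (ptri Q) = {0 :: ('v,'e) qpath \<Rightarrow> 'k::field}"
proof (cases r)
  case Baer
  have "g_baer_rad (palg_ij Q i j) (palg_ij Q j i) (ptri Q) = {0 :: ('v,'e) qpath \<Rightarrow> 'k::field}"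
  proof
    show "g_baer_rad (palg_ij Q i j) (palg_ij Q j i) (ptri Q) \<subseteq> {0 :: ('v,'e) qpath \<Rightarrow> 'k::field}"
      unfolding g_baer_rad_def using zero_prime[OF hji] by blast
    show "{0 :: ('v,'e) qpath \<Rightarrow> 'k::field} \<subseteq> g_baer_rad (palg_ij Q i j) (palg_ij Q j i) (ptri Q)"
      unfolding g_baer_rad_def g_prime_def g_ideal_def add_subgroup_def by blast
  qed
  then show ?thesis using Baer by simp
next
  case Levitzki
  have "\<Union>{I. g_ideal (palg_ij Q i j) (palg_ij Q j i) (ptri Q) I \<and> g_locnil (palg_ij Q j i) (ptri Q) I}
      \<subseteq> {0 :: ('v,'e) qpath \<Rightarrow> 'k::field}"
    using casea_sub[OF hji iv] by blast
  then show ?thesis using Levitzki g_gen_zero by (simp add: g_lev_rad_def)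
next
  case Koethe
  have "\<Union>{I. g_ideal (palg_ij Q i j) (palg_ij Q j i) (ptri Q) I \<and> g_nil (palg_ij Q j i) (ptri Q) I}
      \<subseteq> {0 :: ('v,'e) qpath \<Rightarrow> 'k::field}"
    using casea_sub[OF hji iv] by blast
  then show ?thesis using Koethe g_gen_zero by (simp add: g_nil_rad_def)
next
  case Jacobson
  have "\<Union>{I. g_ideal (palg_ij Q i j) (palg_ij Q j i) (ptri Q) I \<and> g_qreg (palg_ij Q i j) (palg_ij Q j i) (ptri Q) I}
      \<subseteq> {0 :: ('v,'e) qpath \<Rightarrow> 'k::field}"
    using casea_sub[OF hji iv] by blast
  then show ?thesis using Jacobson g_gen_zero by (simp add: g_jac_rad_def)
qed

end

context fixes Q :: "('v,'e) quiver" assumes wf: "wf_quiver Q"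
begin

lemma kR_subgroup: "add_subgroup (kR Q :: (('v,'e) qpath \<Rightarrow> 'k::field) set)"
  using kR_ideal[OF wf] unfolding r_ideal_def by blast

lemma sum_eq: "sum_gamma_rad r Q = (kR Q :: (('v,'e) qpath \<Rightarrow> 'k::field) set)"
proof -
  let ?U = "\<Union>i\<in>verts Q. \<Union>j\<in>verts Q. (gamma_rad r (palg_ij Q i j) (palg_ij Q j i) (ptri Q) :: (('v,'e) qpath \<Rightarrow> 'k) set)"
  have Usub: "?U \<subseteq> kR Q"
  proof (intro UN_least)
    fix i j assume iv: "i \<in> verts Q" and jv: "j \<in> verts Q"
    show "(gamma_rad r (palg_ij Q i j) (palg_ij Q j i) (ptri Q) :: (('v,'e) qpath \<Rightarrow> 'k) set) \<subseteq> kR Q"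
    proof (cases "has_path Q j i")
      case True
      have "(0 :: ('v,'e) qpath \<Rightarrow> 'k) \<in> kR Q" using add_subgroup_zero[OF kR_subgroup] .
      moreover have "(gamma_rad r (palg_ij Q i j) (palg_ij Q j i) (ptri Q) :: (('v,'e) qpath \<Rightarrow> 'k) set) = {0}"
        by (rule casea[OF wf True iv])
      ultimately show ?thesis by simp
    next
      case False
      have e: "(gamma_rad r (palg_ij Q i j) (palg_ij Q j i) (ptri Q) :: (('v,'e) qpath \<Rightarrow> 'k) set) = palg_ij Q i j"
        by (rule caseb[OF wf False])
      show ?thesis unfolding e by (rule caseb_kR[OF wf False iv])
    qed
  qed
  have "add_span ?U = kR Q"
  proof
    show "add_span ?U \<subseteq> kR Q" unfolding add_span_def using Usub kR_subgroup by blast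
    show "kR Q \<subseteq> add_span ?U" unfolding add_span_def
    proof (intro Inter_greatest, clarify)
      fix G :: "(('v,'e) qpath \<Rightarrow> 'k) set" and x :: "('v,'e) qpath \<Rightarrow> 'k"
      assume G: "?U \<subseteq> G" "add_subgroup G" and x: "x \<in> kR Q"
      show "x \<in> G"
      proof (rule decomp[OF G(2)])
        show "finite {p. x p \<noteq> 0}" using x unfolding kR_def palg_def by blast
        fix p assume xp: "x p \<noteq> 0"
        have r: "regular_path Q p" using x xp unfolding kR_def by blast
        have ip: "is_path Q p" using r unfolding regular_path_def by blast
        have vv: "fst p \<in> verts Q" "pend Q p \<in> verts Q" using path_verts[OF wf ip] by blast+
        have nh: "\<not> has_path Q (pend Q p) (fst p)" using r unfolding regular_path_def by blast
        have "dl p (x p) \<in> palg_ij Q (fst p) (pend Q p)" by (rule palg_ij_dl[OF ip]) simp_all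
        moreover have e: "(gamma_rad r (palg_ij Q (fst p) (pend Q p)) (palg_ij Q (pend Q p) (fst p)) (ptri Q) :: (('v,'e) qpath \<Rightarrow> 'k) set) = palg_ij Q (fst p) (pend Q p)"
          by (rule caseb[OF wf nh])
        ultimately have "dl p (x p) \<in> (gamma_rad r (palg_ij Q (fst p) (pend Q p)) (palg_ij Q (pend Q p) (fst p)) (ptri Q) :: (('v,'e) qpath \<Rightarrow> 'k) set)"
          by simp
        then have "dl p (x p) \<in> ?U" using vv by blast
        then show "dl p (x p) \<in> G" using G(1) by blast
      qed
    qed
  qed
  then show ?thesis unfolding sum_gamma_rad_def .
qed

end

theorem theorem3p3:
  fixes Q :: "('v, 'e) quiver" and r :: radical_kind
  assumes "wf_quiver Q"
  shows "ring_rad r (palg Q) (pmul Q) = gm_rad r Q \<and>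
         gm_rad r Q = sum_gamma_rad r Q \<and>
         sum_gamma_rad r Q = (kR Q :: (('v, 'e) qpath \<Rightarrow> 'k::field) set)"
  by (simp add: ring_rad_eq[OF assms] gm_eq[OF assms] sum_eq[OF assms])


end
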